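(* For any constant $\epsilon\in(0,1)$ and any $\alpha\in(0,1)$, IPR with $\rho=4$ is a $(2+2/\alpha)$-robust partitioning algorithm.
   Context: Scheduling with Speed Predictions (SSP). An instance consists of $n$ jobs with processing times $p_1,\dots,p_n\ge0$ and $m$ machines with true speeds $s_1,\dots,s_m>0$; job $j$ on machine $i$ takes time $p_j/s_i$. For a bag $B$, $p(B)=\sum_{j\in B}p_j$. In the partitioning stage the algorithm receives $\mathbf p$ and predicted speeds $\hat{\mathbf s}\ge0$ (not $\mathbf s$) and partitions $[n]$ into $m$ possibly empty bags. In the scheduling stage $\mathbf s$ is revealed and each bag is assigned whole to a machine; the makespan is $\max_i(\text{total processing time on } i)/s_i$. $opt(\mathbf p,\mathbf s)$ is the minimum makespan of assigning individual jobs knowing $\mathbf s$. A partitioning algorithm is $\beta$-robust if, for all $\mathbf p,\hat{\mathbf s},\mathbf s$, the two-stage algorithm that runs it and then assigns the bags to the machines with minimum possible makespan has makespan at most $\beta\cdot opt(\mathbf p,\mathbf s)$. Algorithm IPR. Input: predicted speeds $\hat s_1\ge\dots\ge\hat s_m$, $\mathbf p$, $\alpha$, accuracy $\epsilon\in(0,1)$, $\rho\ge1$. (1) Compute a partition $B_1,\dots,B_m$ with $p(B_1)\ge\dots\ge p(B_m)$ such that putting $B_i$ on machine $i$ has makespan at most $(1+\epsilon)opt(\mathbf p,\hat{\mathbf s})$ under speeds $\hat{\mathbf s}$. (2) Set $\overline{OPT}_C=\max_i p(B_i)/\hat s_i$ and $\mathcal M_i=\{B_i\}$. (3) While $\max\{p(B):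 B\in\cup_i\mathcal M_i, |B|\ge2\}>\rho\min\{p(B):B\in\cup_i\mathcal M_i\}$: compute $\mathcal M'=$ LPT-Rebalance$(\mathcal M)$; if $\max_i\sum_{B\in\mathcal M'_i}p(B)/\hat s_i>(1+\alpha)\overline{OPT}_C$ return the current bags $\cup_i\mathcal M_i$; else $\mathcal M\leftarrow\mathcal M'$. (4) Return the bags $\cup_i\mathcal M_i$. LPT-Rebalance: let $B_{\min}$ be a bag of minimum $p(B)$ over all bags, $\mathcal M_{\min}$ its collection, $\mathcal M_{\max}$ a collection containing a bag of maximum $p(B)$ among bags with at least two jobs. Move $B_{\min}$ into $\mathcal M_{\max}$, let $\ell=|\mathcal M_{\max}|$, pool its jobs and redistribute them into $\ell$ new bags by LPT (jobs in non-increasing processing time, each into a currently least-loaded bag); these form the new $\mathcal M_{\max}$. *)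

theory Defs
  imports Complex_Main "HOL-Library.FuncSet" "HOL-Library.Extended_Real"
begin

text \<open>Jobs are 0..<n with processing times p, machines are 0..<m.
  Bags are sets of job indices.\<close>

definition psum :: "(nat \<Rightarrow> real) \<Rightarrow> nat set \<Rightarrow> real" where
  "psum p B = (\<Sum>j\<in>B. p j)"

text \<open>Completion time of a load x on a machine of speed y (y may be 0 for
  predicted speeds: then any positive load takes infinite time).\<close>
definition ratio :: "real \<Rightarrow> real \<Rightarrow> ereal" where
  "ratio x y = (if y = 0 then (if x = 0 then 0 else \<infinity>) else ereal (x / y))"

definition opt :: "(nat \<Rightarrow> real) \<Rightarrow> (nat \<Rightarrow> real) \<Rightarrow> nat \<Rightarrow> nat \<Rightarrow> ereal" where
  "opt p s n m = Min ((\<lambda>f. Max ((\<lambda>i. ratio (\<Sum>j\<in>{j. j < n \<and> f j = i}. p j) (s i)) ` {0..<m}))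
                     ` ({0..<n} \<rightarrow>\<^sub>E {0..<m}))"

definition opt_bags :: "(nat \<Rightarrow> real) \<Rightarrow> (nat \<Rightarrow> real) \<Rightarrow> nat \<Rightarrow> nat set list \<Rightarrow> ereal" where
  "opt_bags p s m bags = Min ((\<lambda>g. Max ((\<lambda>i. ratio (\<Sum>b\<in>{b. b < length bags \<and> g b = i}. psum p (bags ! b)) (s i)) ` {0..<m}))
                     ` ({0..<length bags} \<rightarrow>\<^sub>E {0..<m}))"

text \<open>LPT: jobs in the given order, each into a currently least-loaded bag (ties arbitrary).\<close>
inductive lpt_place :: "(nat \<Rightarrow> real) \<Rightarrow> nat set list \<Rightarrow> nat list \<Rightarrow> nat set list \<Rightarrow> bool" where
  lpt_nil: "lpt_place p bags [] bags"
| lpt_cons: "\<lbrakk> k < length bags; \<forall>k'<length bags. psum p (bags ! k) \<le> psum p (bags ! k');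
              lpt_place p (bags[k := insert j (bags ! k)]) js bags' \<rbrakk>
             \<Longrightarrow> lpt_place p bags (j # js) bags'"

definition lpt :: "(nat \<Rightarrow> real) \<Rightarrow> nat set \<Rightarrow> nat \<Rightarrow> nat set list \<Rightarrow> bool" where
  "lpt p pool l res \<longleftrightarrow> (\<exists>js. distinct js \<and> set js = pool \<and> sorted_wrt (\<lambda>a b. p a \<ge> p b) js
                           \<and> lpt_place p (replicate l {}) js res)"

text \<open>A state: for each k < m (machine with k-th largest predicted speed) a list
  (collection) of bags. Bag positions and bags:\<close>
definition bagpos :: "nat \<Rightarrow> (nat \<Rightarrow> nat set list) \<Rightarrow> (nat \<times> nat) set" where
  "bagpos m M = {(k, t). k < m \<and> t < length (M k)}"

definition bag :: "(nat \<Rightarrow> nat set list) \<Rightarrow> nat \<times> nat \<Rightarrow> nat set" where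
  "bag M q = M (fst q) ! snd q"

definition all_bags :: "nat \<Rightarrow> (nat \<Rightarrow> nat set list) \<Rightarrow> nat set list" where
  "all_bags m M = concat (map M [0..<m])"

definition loop_cond :: "(nat \<Rightarrow> real) \<Rightarrow> nat \<Rightarrow> real \<Rightarrow> (nat \<Rightarrow> nat set list) \<Rightarrow> bool" where
  "loop_cond p m \<rho> M \<longleftrightarrow>
     (let P = bagpos m M; Big = {q \<in> P. card (bag M q) \<ge> 2} in
        Big \<noteq> {} \<and> Max ((\<lambda>q. psum p (bag M q)) ` Big) > \<rho> * Min ((\<lambda>q. psum p (bag M q)) ` P))"

definition remove_nth :: "nat \<Rightarrow> 'a list \<Rightarrow> 'a list" where
  "remove_nth t xs = take t xs @ drop (Suc t) xs"

definition lpt_rebalance :: "(nat \<Rightarrow> real) \<Rightarrow> nat \<Rightarrow> (nat \<Rightarrow> nat set list) \<Rightarrow> (nat \<Rightarrow> nat set list) \<Rightarrow> bool" where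
  "lpt_rebalance p m M M' \<longleftrightarrow>
     (\<exists>k0 t0 k1 t1 NB.
        let P = bagpos m M in
        (k0, t0) \<in> P \<and> (\<forall>q\<in>P. psum p (bag M (k0, t0)) \<le> psum p (bag M q)) \<and>
        (k1, t1) \<in> P \<and> card (bag M (k1, t1)) \<ge> 2 \<and>
        (\<forall>q\<in>P. card (bag M q) \<ge> 2 \<longrightarrow> psum p (bag M q) \<le> psum p (bag M (k1, t1))) \<and>
        (let Bmin = bag M (k0, t0);
             Mr = M(k0 := remove_nth t0 (M k0));
             pool = Bmin \<union> \<Union> (set (Mr k1));
             l = length (Mr k1) + 1
         in lpt p pool l NB \<and> M' = Mr(k1 := NB)))"

definition pred_makespan :: "(nat \<Rightarrow> real) \<Rightarrow> nat \<Rightarrow> (nat \<Rightarrow> real) \<Rightarrow> (nat \<Rightarrow> nat set list) \<Rightarrow> ereal" where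
  "pred_makespan p m sh M = Max ((\<lambda>k. ratio (sum_list (map (psum p) (M k))) (sh k)) ` {0..<m})"

text \<open>Step (3)/(4): terminating runs of the while loop and their outputs.\<close>
inductive ipr_loop :: "(nat \<Rightarrow> real) \<Rightarrow> nat \<Rightarrow> (nat \<Rightarrow> real) \<Rightarrow> real \<Rightarrow> real \<Rightarrow> ereal
                        \<Rightarrow> (nat \<Rightarrow> nat set list) \<Rightarrow> nat set list \<Rightarrow> bool" where
  loop_stop: "\<not> loop_cond p m \<rho> M \<Longrightarrow> ipr_loop p m sh \<alpha> \<rho> oc M (all_bags m M)"
| loop_reject: "\<lbrakk> loop_cond p m \<rho> M; lpt_rebalance p m M M';
                  pred_makespan p m sh M' > ereal (1 + \<alpha>) * oc \<rbrakk>
                \<Longrightarrow> ipr_loop p m sh \<alpha> \<rho> oc M (all_bags m M)"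
| loop_step: "\<lbrakk> loop_cond p m \<rho> M; lpt_rebalance p m M M';
                \<not> pred_makespan p m sh M' > ereal (1 + \<alpha>) * oc;
                ipr_loop p m sh \<alpha> \<rho> oc M' out \<rbrakk>
              \<Longrightarrow> ipr_loop p m sh \<alpha> \<rho> oc M out"

text \<open>IPR on sorted predicted speeds sh (sh 0 >= sh 1 >= ...), optv = opt(p, predicted speeds).\<close>
definition ipr_core :: "(nat \<Rightarrow> real) \<Rightarrow> nat \<Rightarrow> nat \<Rightarrow> (nat \<Rightarrow> real) \<Rightarrow> ereal
                        \<Rightarrow> real \<Rightarrow> real \<Rightarrow> real \<Rightarrow> nat set list \<Rightarrow> bool" where
  "ipr_core p n m sh optv \<alpha> \<epsilon> \<rho> out \<longleftrightarrow>
     (\<exists>B :: nat \<Rightarrow> nat set.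
        (\<forall>i<m. B i \<subseteq> {0..<n}) \<and> (\<forall>i<m. \<forall>k<m. i \<noteq> k \<longrightarrow> B i \<inter> B k = {}) \<and>
        (\<Union>i\<in>{0..<m}. B i) = {0..<n} \<and>
        (\<forall>i k. i \<le> k \<and> k < m \<longrightarrow> psum p (B i) \<ge> psum p (B k)) \<and>
        Max ((\<lambda>i. ratio (psum p (B i)) (sh i)) ` {0..<m}) \<le> ereal (1 + \<epsilon>) * optv \<and>
        ipr_loop p m sh \<alpha> \<rho> (Max ((\<lambda>i. ratio (psum p (B i)) (sh i)) ` {0..<m})) (\<lambda>i. [B i]) out)"

definition ipr :: "(nat \<Rightarrow> real) \<Rightarrow> nat \<Rightarrow> nat \<Rightarrow> (nat \<Rightarrow> real) \<Rightarrow> real \<Rightarrow> real \<Rightarrow> real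
                   \<Rightarrow> nat set list \<Rightarrow> bool" where
  "ipr p n m shat \<alpha> \<epsilon> \<rho> out \<longleftrightarrow>
     (\<exists>\<pi>. bij_betw \<pi> {0..<m} {0..<m} \<and> (\<forall>i k. i \<le> k \<and> k < m \<longrightarrow> shat (\<pi> i) \<ge> shat (\<pi> k)) \<and>
          ipr_core p n m (shat \<circ> \<pi>) (opt p shat n m) \<alpha> \<epsilon> \<rho> out)"

text \<open>beta-robustness of a (nondeterministic) partitioning algorithm, given as a relation
  alg p n m shat bags ("bags is a possible output").\<close>
definition robust :: "((nat \<Rightarrow> real) \<Rightarrow> nat \<Rightarrow> nat \<Rightarrow> (nat \<Rightarrow> real) \<Rightarrow> nat set list \<Rightarrow> bool)
                      \<Rightarrow> real \<Rightarrow> bool" where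
  "robust alg \<beta> \<longleftrightarrow>
     (\<forall>p n m shat s bags. 1 \<le> m \<and> (\<forall>j<n. p j \<ge> 0) \<and> (\<forall>i<m. shat i \<ge> 0) \<and> (\<forall>i<m. s i > 0)
        \<and> alg p n m shat bags \<longrightarrow> opt_bags p s m bags \<le> ereal \<beta> * opt p s n m)"

end

theory Submission
  imports Defs
begin

definition cntl :: "nat \<Rightarrow> nat set list \<Rightarrow> nat" where
  "cntl j xs = length (filter (\<lambda>B. j \<in> B) xs)"

abbreviation ind :: "nat \<Rightarrow> nat set \<Rightarrow> nat" where
  "ind j B \<equiv> (if j \<in> B then 1 else 0)"

lemma cntl_Nil[simp]: "cntl j [] = 0" by (simp add: cntl_def)
lemma cntl_Cons[simp]: "cntl j (B # xs) = ind j B + cntl j xs" by (simp add: cntl_def)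
lemma cntl_append[simp]: "cntl j (xs @ ys) = cntl j xs + cntl j ys" by (simp add: cntl_def)

lemma cntl_zero_iff: "cntl j xs = 0 \<longleftrightarrow> (\<forall>B\<in>set xs. j \<notin> B)"
  by (induction xs) auto

lemma cntl_update:
  "k < length xs \<Longrightarrow> cntl j (xs[k := B]) + ind j (xs ! k) = cntl j xs + ind j B"
proof (induction xs arbitrary: k)
  case Nil then show ?case by simp
next
  case (Cons a xs) then show ?case by (cases k) auto
qed

lemma cntl_remove_nth:
  "t < length xs \<Longrightarrow> cntl j (remove_nth t xs) + ind j (xs ! t) = cntl j xs"
proof -
  assume t: "t < length xs"
  have "xs = take t xs @ xs ! t # drop (Suc t) xs" using t by (simp add: id_take_nth_drop)
  then have "cntl j xs = cntl j (take t xs) + ind j (xs ! t) + cntl j (drop (Suc t) xs)"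
    by (metis add.assoc cntl_Cons cntl_append)
  then show ?thesis by (simp add: remove_nth_def)
qed

lemma length_remove_nth: "t < length xs \<Longrightarrow> length (remove_nth t xs) = length xs - 1"
  by (simp add: remove_nth_def)

lemma set_remove_nth: "set (remove_nth t xs) \<subseteq> set xs"
  unfolding remove_nth_def by (metis set_take_subset set_drop_subset Un_subset_iff set_append)

lemma sum_list_remove_nth:
  fixes f :: "nat set \<Rightarrow> real"
  shows "t < length xs \<Longrightarrow> sum_list (map f (remove_nth t xs)) + f (xs ! t) = sum_list (map f xs)"
proof -
  assume t: "t < length xs"
  have "xs = take t xs @ xs ! t # drop (Suc t) xs" using t by (simp add: id_take_nth_drop)
  then have "sum_list (map f xs) = sum_list (map f (take t xs)) + f (xs ! t) + sum_list (map f (drop (Suc t) xs))"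
    by (metis (no_types, lifting) add.assoc list.simps(9) map_append sum_list.Cons sum_list.append)
  then show ?thesis by (simp add: remove_nth_def)
qed

lemma psum_insert: "finite B \<Longrightarrow> j \<notin> B \<Longrightarrow> psum p (insert j B) = p j + psum p B"
  by (simp add: psum_def)

lemma psum_mono: "finite B \<Longrightarrow> A \<subseteq> B \<Longrightarrow> (\<forall>j\<in>B. 0 \<le> p j) \<Longrightarrow> psum p A \<le> psum p B"
  unfolding psum_def by (rule sum_mono2) auto

lemma psum_nonneg: "(\<forall>j\<in>B. 0 \<le> p j) \<Longrightarrow> 0 \<le> psum p B"
  unfolding psum_def by (rule sum_nonneg) auto

lemma psum_as_sum:
  assumes "finite U" "B \<subseteq> U"
  shows "psum p B = (\<Sum>j\<in>U. p j * real (ind j B))"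
proof -
  have "(\<Sum>j\<in>U. p j * real (ind j B)) = (\<Sum>j\<in>U. if j \<in> B then p j else 0)"
    by (rule sum.cong) auto
  also have "\<dots> = (\<Sum>j\<in>U \<inter> B. p j)" by (simp add: sum.inter_restrict[OF assms(1)])
  also have "U \<inter> B = B" using assms(2) by blast
  finally show ?thesis by (simp add: psum_def)
qed

lemma psum_list:
  assumes "finite U" "\<forall>B\<in>set xs. B \<subseteq> U"
  shows "sum_list (map (psum p) xs) = (\<Sum>j\<in>U. p j * real (cntl j xs))"
  using assms(2)
proof (induction xs)
  case Nil then show ?case by simp
next
  case (Cons B xs)
  have "psum p B = (\<Sum>j\<in>U. p j * real (ind j B))" using Cons.prems psum_as_sum[OF assms(1)] by auto
  then show ?case using Cons by (simp add: sum.distrib algebra_simps)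
qed

lemma lpt_place_len: "lpt_place p bags js bags' \<Longrightarrow> length bags' = length bags"
  by (induction rule: lpt_place.induct) auto

lemma lpt_place_cnt:
  "lpt_place p bags js bags' \<Longrightarrow> distinct js \<Longrightarrow> (\<forall>j\<in>set js. cntl j bags = 0)
   \<Longrightarrow> cntl j bags' = cntl j bags + (if j \<in> set js then 1 else 0)"
proof (induction arbitrary: j rule: lpt_place.induct)
  case (lpt_nil p bags) then show ?case by simp
next
  case (lpt_cons k bags p j0 js bags')
  let ?b1 = "bags[k := insert j0 (bags ! k)]"
  have upd: "\<And>x. cntl x ?b1 + ind x (bags ! k) = cntl x bags + ind x (insert j0 (bags ! k))"
    using cntl_update lpt_cons.hyps(1) by blast
  have nin: "\<And>x. cntl x bags = 0 \<Longrightarrow> x \<notin> bags ! k"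
    using cntl_zero_iff lpt_cons.hyps(1) nth_mem by blast
  have z: "\<forall>x\<in>set js. cntl x ?b1 = 0"
  proof
    fix x assume x: "x \<in> set js"
    then have "x \<noteq> j0" using lpt_cons.prems(1) by auto
    moreover have "cntl x bags = 0" using x lpt_cons.prems(2) by auto
    ultimately show "cntl x ?b1 = 0" using upd[of x] nin[of x] by auto
  qed
  have IH: "cntl j bags' = cntl j ?b1 + (if j \<in> set js then 1 else 0)"
    using lpt_cons.IH[of j] lpt_cons.prems(1) z by auto
  show ?case
  proof (cases "j = j0")
    case True
    then have "cntl j bags = 0" using lpt_cons.prems(2) by auto
    then have "cntl j ?b1 = 1" using upd[of j] nin[of j] True by auto
    moreover have "j \<notin> set js" using True lpt_cons.prems(1) by auto
    ultimately show ?thesis using IH True \<open>cntl j bags = 0\<close> by simp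
  next
    case False
    then have "cntl j ?b1 = cntl j bags" using upd[of j] by auto
    then show ?thesis using IH False by simp
  qed
qed


lemma lpt_place_F1:
  "lpt_place p bags js bags' \<Longrightarrow> sorted_wrt (\<lambda>a b. p a \<ge> p b) js \<Longrightarrow> distinct js \<Longrightarrow>
   (\<forall>k<length bags. finite (bags!k) \<and> set js \<inter> bags!k = {}) \<Longrightarrow>
   (\<forall>B\<in>set bags. \<forall>i\<in>B. \<forall>j\<in>set js. p j \<le> p i) \<Longrightarrow>
   (\<forall>j\<in>set js \<union> \<Union>(set bags). 0 \<le> p j) \<Longrightarrow>
   length bags' = length bags \<and>
   (\<forall>k<length bags. bags!k \<subseteq> bags'!k \<and> finite (bags'!k) \<and> bags'!k \<subseteq> bags!k \<union> set js) \<and>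
   (\<forall>k<length bags. bags'!k \<noteq> bags!k \<longrightarrow> (\<exists>j\<in>bags'!k. (\<forall>i\<in>bags'!k. p j \<le> p i) \<and>
        (\<forall>k'<length bags. psum p (bags'!k) - p j \<le> psum p (bags'!k'))))"
proof (induction rule: lpt_place.induct)
  case (lpt_nil p bags) then show ?case by simp
next
  case (lpt_cons k bags p j0 js bags')
  let ?b1 = "bags[k := insert j0 (bags ! k)]"
  have k: "k < length bags" by fact
  have j0nin: "j0 \<notin> bags ! k" using lpt_cons.prems(3) k by auto
  have j0js: "j0 \<notin> set js" using lpt_cons.prems(2) by auto
  have b1k: "\<And>k'. k' < length bags \<Longrightarrow> ?b1 ! k' = (if k' = k then insert j0 (bags ! k) else bags ! k')"
    using k by auto
  have pre3: "\<forall>k'<length ?b1. finite (?b1!k') \<and> set js \<inter> ?b1!k' = {}"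
    using lpt_cons.prems(3) b1k j0js by auto
  have pre4: "\<forall>B\<in>set ?b1. \<forall>i\<in>B. \<forall>j\<in>set js. p j \<le> p i"
  proof (intro ballI)
    fix B i j assume B: "B \<in> set ?b1" and i: "i \<in> B" and j: "j \<in> set js"
    obtain k' where k': "k' < length bags" "B = ?b1 ! k'" using B by (auto simp: in_set_conv_nth)
    show "p j \<le> p i"
    proof (cases "k' = k \<and> i = j0")
      case True
      then show ?thesis using lpt_cons.prems(1) j by auto
    next
      case False
      then have "i \<in> bags ! k'" using k' i b1k by (auto split: if_splits)
      then show ?thesis using lpt_cons.prems(4) k' j by (meson nth_mem list.set_intros(2))
    qed
  qed
  have u1: "\<Union>(set ?b1) \<subseteq> insert j0 (\<Union>(set bags))"
    using set_update_subset_insert[of bags k "insert j0 (bags ! k)"] k by auto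
  have pre5: "\<forall>j\<in>set js \<union> \<Union>(set ?b1). 0 \<le> p j"
    using lpt_cons.prems(5) u1 by auto
  have sj: "sorted_wrt (\<lambda>a b. p b \<le> p a) js" "distinct js" using lpt_cons.prems(1,2) by auto
  note IH = lpt_cons.IH[OF sj pre3 pre4 pre5]
  have len: "length bags' = length bags" using IH by simp
  have sub: "\<forall>k'<length bags. ?b1!k' \<subseteq> bags'!k' \<and> finite (bags'!k') \<and> bags'!k' \<subseteq> ?b1!k' \<union> set js"
    using IH by simp
  have nonneg': "\<And>k'. k' < length bags \<Longrightarrow> \<forall>j\<in>bags'!k'. 0 \<le> p j"
  proof -
    fix k' assume k': "k' < length bags"
    have "bags'!k' \<subseteq> ?b1!k' \<union> set js" using sub k' by auto
    moreover have "?b1!k' \<subseteq> insert j0 (bags!k')" using b1k k' by auto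
    moreover have "bags!k' \<subseteq> \<Union>(set bags)" using k' nth_mem by blast
    ultimately have "bags'!k' \<subseteq> insert j0 (set js \<union> \<Union>(set bags))" by blast
    moreover have "\<forall>j\<in>insert j0 (set js \<union> \<Union>(set bags)). 0 \<le> p j"
      using lpt_cons.prems(5) by simp
    ultimately show "\<forall>j\<in>bags'!k'. 0 \<le> p j" by (meson subsetD)
  qed
  have mono: "\<And>k'. k' < length bags \<Longrightarrow> psum p (bags!k') \<le> psum p (bags'!k')"
  proof -
    fix k' assume k': "k' < length bags"
    have s1: "?b1!k' \<subseteq> bags'!k'" using sub k' by blast
    have s2: "bags!k' \<subseteq> ?b1!k'" using b1k[OF k'] by auto
    have "bags!k' \<subseteq> bags'!k'" using s1 s2 by blast
    then show "psum p (bags!k') \<le> psum p (bags'!k')"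
      using psum_mono sub k' nonneg'[OF k'] by blast
  qed
  have part2: "\<forall>k'<length bags. bags!k' \<subseteq> bags'!k' \<and> finite (bags'!k') \<and> bags'!k' \<subseteq> bags!k' \<union> set (j0 # js)"
    using sub b1k by (auto split: if_splits)
  have part3: "\<forall>k'<length bags. bags'!k' \<noteq> bags!k' \<longrightarrow> (\<exists>j\<in>bags'!k'. (\<forall>i\<in>bags'!k'. p j \<le> p i) \<and>
        (\<forall>k''<length bags. psum p (bags'!k') - p j \<le> psum p (bags'!k'')))"
  proof (intro allI impI)
    fix k' assume k': "k' < length bags" and ne: "bags'!k' \<noteq> bags!k'"
    show "\<exists>j\<in>bags'!k'. (\<forall>i\<in>bags'!k'. p j \<le> p i) \<and>
        (\<forall>k''<length bags. psum p (bags'!k') - p j \<le> psum p (bags'!k''))"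
    proof (cases "bags'!k' = ?b1!k'")
      case False
      then show ?thesis using IH k' by simp
    next
      case True
      then have kk: "k' = k" using ne b1k[OF k'] by (auto split: if_splits)
      have eq: "bags'!k = insert j0 (bags!k)" using True kk b1k[OF k] by simp
      have fin: "finite (bags!k)" using lpt_cons.prems(3) k by auto
      have ps: "psum p (bags'!k) - p j0 = psum p (bags!k)"
        using eq psum_insert[OF fin j0nin] by simp
      show ?thesis
      proof (rule bexI[of _ j0], intro conjI allI impI ballI)
        fix i assume "i \<in> bags'!k'"
        then have "i = j0 \<or> i \<in> bags!k" using eq kk by auto
        then show "p j0 \<le> p i" using lpt_cons.prems(4) k by (metis order.refl list.set_intros(1) nth_mem)
      next
        fix k'' assume k'': "k'' < length bags"
        have "psum p (bags!k) \<le> psum p (bags!k'')" using lpt_cons.hyps(2) k'' by auto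
        also have "\<dots> \<le> psum p (bags'!k'')" using mono k'' by auto
        finally show "psum p (bags'!k') - p j0 \<le> psum p (bags'!k'')" using ps kk by simp
      next
        show "j0 \<in> bags'!k'" using eq kk by simp
      qed
    qed
  qed
  show ?case using len part2 part3 by simp
qed


lemma psum_two: "finite B \<Longrightarrow> i \<in> B \<Longrightarrow> j \<in> B \<Longrightarrow> i \<noteq> j \<Longrightarrow> (\<forall>k\<in>B. 0 \<le> p k) \<Longrightarrow> p i + p j \<le> psum p B"
proof -
  assume a: "finite B" "i \<in> B" "j \<in> B" "i \<noteq> j" "\<forall>k\<in>B. 0 \<le> p k"
  have "psum p {i, j} \<le> psum p B" using a by (intro psum_mono) auto
  then show ?thesis using a(4) by (simp add: psum_def)
qed

lemma lpt_props:
  assumes lpt: "lpt p pool l NB" and fin: "finite pool" and nn: "\<forall>j\<in>pool. 0 \<le> p j"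
  shows "length NB = l" "\<forall>j. cntl j NB = ind j pool" "\<forall>B\<in>set NB. finite B \<and> B \<subseteq> pool"
    "\<forall>A\<in>set NB. A \<noteq> {} \<longrightarrow> (\<exists>j\<in>A. (\<forall>i\<in>A. p j \<le> p i) \<and> (\<forall>B\<in>set NB. psum p A - p j \<le> psum p B))"
proof -
  obtain js where js: "distinct js" "set js = pool" "sorted_wrt (\<lambda>a b. p a \<ge> p b) js"
    "lpt_place p (replicate l {}) js NB"
    using lpt unfolding lpt_def by blast
  have F: "length NB = l \<and>
   (\<forall>k<l. {} \<subseteq> NB!k \<and> finite (NB!k) \<and> NB!k \<subseteq> {} \<union> set js) \<and>
   (\<forall>k<l. NB!k \<noteq> {} \<longrightarrow> (\<exists>j\<in>NB!k. (\<forall>i\<in>NB!k. p j \<le> p i) \<and>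
        (\<forall>k'<l. psum p (NB!k) - p j \<le> psum p (NB!k'))))"
    using lpt_place_F1[OF js(4) js(3) js(1)] js(2) nn by simp
  show len: "length NB = l" using F by simp
  show "\<forall>j. cntl j NB = ind j pool"
  proof
    fix j
    have "\<forall>j\<in>set js. cntl j (replicate l {}) = 0" by (simp add: cntl_zero_iff)
    then have "cntl j NB = cntl j (replicate l {}) + ind j (set js)"
      using lpt_place_cnt[OF js(4) js(1)] by blast
    then show "cntl j NB = ind j pool" using js(2) by (simp add: cntl_zero_iff)
  qed
  show "\<forall>B\<in>set NB. finite B \<and> B \<subseteq> pool"
  proof
    fix B assume "B \<in> set NB"
    then obtain k where "k < l" "B = NB ! k" using len by (auto simp: in_set_conv_nth)
    then show "finite B \<and> B \<subseteq> pool" using F js(2) by auto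
  qed
  show "\<forall>A\<in>set NB. A \<noteq> {} \<longrightarrow> (\<exists>j\<in>A. (\<forall>i\<in>A. p j \<le> p i) \<and> (\<forall>B\<in>set NB. psum p A - p j \<le> psum p B))"
  proof (intro ballI impI)
    fix A assume A: "A \<in> set NB" "A \<noteq> {}"
    obtain k where k: "k < l" "A = NB ! k" using A len by (auto simp: in_set_conv_nth)
    obtain j where j: "j \<in> A" "\<forall>i\<in>A. p j \<le> p i" "\<forall>k'<l. psum p A - p j \<le> psum p (NB!k')"
      using F k A by blast
    have "\<forall>B\<in>set NB. psum p A - p j \<le> psum p B" using j(3) len by (metis in_set_conv_nth)
    then show "\<exists>j\<in>A. (\<forall>i\<in>A. p j \<le> p i) \<and> (\<forall>B\<in>set NB. psum p A - p j \<le> psum p B)"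
      using j(1,2) by blast
  qed
qed

lemma lpt_pairwise:
  assumes lpt: "lpt p pool l NB" and fin: "finite pool" and nn: "\<forall>j\<in>pool. 0 \<le> p j"
  shows "\<forall>A\<in>set NB. \<forall>B\<in>set NB. 2 \<le> card A \<longrightarrow> psum p A \<le> 2 * psum p B"
proof (intro ballI impI)
  fix A B assume A: "A \<in> set NB" and B: "B \<in> set NB" and c: "2 \<le> card A"
  have fA: "finite A" "A \<subseteq> pool" using lpt_props(3)[OF assms] A by auto
  have ne: "A \<noteq> {}" using c by auto
  obtain j where j: "j \<in> A" "\<forall>i\<in>A. p j \<le> p i" "psum p A - p j \<le> psum p B"
    using lpt_props(4)[OF assms] A B ne by blast
  obtain i where i: "i \<in> A" "i \<noteq> j"
  proof -
    have "\<not> A \<subseteq> {j}"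
    proof
      assume "A \<subseteq> {j}"
      then have "card A \<le> card {j}" by (intro card_mono) auto
      then show False using c by simp
    qed
    then show ?thesis using that by blast
  qed
  have "p i + p j \<le> psum p A" using psum_two[OF fA(1) i(1) j(1) i(2)] fA(2) nn by blast
  then show "psum p A \<le> 2 * psum p B" using j(2) i(1) j(3) by fastforce
qed

lemma min_psum:
  assumes "finite G" "\<forall>j\<in>G. 0 \<le> p j" "0 \<le> \<kappa>"
  shows "min (psum p G) \<kappa> \<le> psum (\<lambda>j. min (p j) \<kappa>) G"
  using assms
proof (induction G rule: finite_induct)
  case empty then show ?case by (simp add: psum_def)
next
  case (insert a F)
  have IH: "min (psum p F) \<kappa> \<le> psum (\<lambda>j. min (p j) \<kappa>) F" using insert by auto
  have "0 \<le> psum p F" using insert.prems psum_nonneg by auto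
  moreover have "0 \<le> p a" using insert.prems by auto
  ultimately have "min (p a + psum p F) \<kappa> \<le> min (p a) \<kappa> + min (psum p F) \<kappa>"
    using insert.prems(2) \<open>0 \<le> \<kappa>\<close> by (simp add: min_def)
  then show ?case using IH insert.hyps by (simp add: psum_insert)
qed

lemma sum_list_bound:
  fixes f :: "'a \<Rightarrow> real"
  shows "(\<forall>B\<in>set ys. f B \<le> c) \<Longrightarrow> sum_list (map f ys) \<le> real (length ys) * c"
  by (induction ys) (auto simp: algebra_simps)

lemma sum_list_bound_ge:
  fixes f :: "'a \<Rightarrow> real"
  shows "(\<forall>B\<in>set ys. c \<le> f B) \<Longrightarrow> real (length ys) * c \<le> sum_list (map f ys)"
  by (induction ys) (auto simp: algebra_simps)


lemma psum_le_min: "psum (\<lambda>j. min (p j) \<kappa>) B \<le> psum p B"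
  unfolding psum_def by (rule sum_mono) simp

lemma lpt_min_ge:
  assumes lpt: "lpt p pool l NB" and fin: "finite pool" and nn: "\<forall>j\<in>pool. 0 \<le> p j"
    and l: "l = length gs + 1"
    and part: "\<forall>j. ind j G0 + cntl j gs = ind j pool"
    and G0: "psum p G0 = \<mu>" and gs: "\<forall>G\<in>set gs. 2 * \<mu> \<le> psum p G"
    and sub: "G0 \<subseteq> pool" "\<forall>G\<in>set gs. G \<subseteq> pool"
  shows "\<forall>B\<in>set NB. \<mu> \<le> psum p B"
proof (rule ccontr)
  assume "\<not> ?thesis"
  then obtain X where X: "X \<in> set NB" "psum p X < \<mu>" by force
  note P = lpt_props[OF lpt fin nn]
  have fNB: "finite (psum p ` set NB)" by simp
  define x where "x = Min (psum p ` set NB)"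
  have xX: "x \<le> psum p X" using X(1) fNB x_def by simp
  obtain X0 where X0: "X0 \<in> set NB" "psum p X0 = x"
    using Min_in[OF fNB] X(1) x_def by (metis empty_iff image_iff)
  have xmin: "\<forall>B\<in>set NB. x \<le> psum p B" using fNB x_def by simp
  have x0: "0 \<le> x" using X0 P(3) nn psum_nonneg by (metis subsetD)
  have xmu: "x < \<mu>" using xX X(2) by simp
  define \<kappa> where "\<kappa> = x + \<mu>"
  define w where "w = (\<lambda>j. min (p j) \<kappa>)"
  have k0: "0 \<le> \<kappa>" using x0 xmu \<kappa>_def by simp
  have wnn: "\<forall>j\<in>pool. 0 \<le> w j" using nn k0 w_def by simp
  have ub: "\<forall>B\<in>set NB. psum w B \<le> \<kappa>"
  proof
    fix B assume B: "B \<in> set NB"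
    have fB: "finite B" "B \<subseteq> pool" using P(3) B by auto
    show "psum w B \<le> \<kappa>"
    proof (cases "B = {}")
      case True then show ?thesis using k0 by (simp add: psum_def)
    next
      case False
      obtain j where j: "j \<in> B" "\<forall>i\<in>B. p j \<le> p i" "psum p B - p j \<le> x"
        using P(4) B False X0 by metis
      show ?thesis
      proof (cases "2 * p j \<le> \<kappa>")
        case True
        have "psum w B \<le> psum p B" unfolding w_def by (rule psum_le_min)
        also have "\<dots> \<le> x + p j" using j(3) by simp
        also have "\<dots> \<le> \<kappa>" using True \<kappa>_def xmu by simp
        finally show ?thesis .
      next
        case False
        have "B = {j}"
        proof (rule ccontr)
          assume "B \<noteq> {j}"
          then obtain i where i: "i \<in> B" "i \<noteq> j" using j(1) by blast
          have "p i + p j \<le> psum p B" using psum_two[OF fB(1) i(1) j(1) i(2)] fB(2) nn by blast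
          then show False using j(2) i(1) j(3) False \<kappa>_def xmu by fastforce
        qed
        then show ?thesis by (simp add: psum_def w_def)
      qed
    qed
  qed
  have X0w: "psum w X0 \<le> x" using psum_le_min X0(2) unfolding w_def by metis
  have sumNB: "sum_list (map (psum w) NB) \<le> x + real (l - 1) * \<kappa>"
  proof -
    have "sum_list (map (psum w) NB) = psum w X0 + sum_list (map (psum w) (remove1 X0 NB))"
      using X0(1) by (simp add: sum_list_map_remove1)
    moreover have "sum_list (map (psum w) (remove1 X0 NB)) \<le> real (length (remove1 X0 NB)) * \<kappa>"
      using ub by (intro sum_list_bound) (meson notin_set_remove1)
    moreover have "length (remove1 X0 NB) = l - 1" using X0(1) P(1) by (simp add: length_remove1)
    ultimately show ?thesis using X0w by simp
  qed
  (* both sides equal the total weight of the pool *)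
  have allsub: "\<forall>B\<in>set NB. B \<subseteq> pool" using P(3) by auto
  have eqNB: "sum_list (map (psum w) NB) = (\<Sum>j\<in>pool. w j * real (cntl j NB))"
    by (rule psum_list[OF fin allsub])
  have eqG: "psum w G0 + sum_list (map (psum w) gs) = (\<Sum>j\<in>pool. w j * real (ind j G0 + cntl j gs))"
  proof -
    have "psum w G0 = (\<Sum>j\<in>pool. w j * real (ind j G0))" by (rule psum_as_sum[OF fin sub(1)])
    moreover have "sum_list (map (psum w) gs) = (\<Sum>j\<in>pool. w j * real (cntl j gs))"
      by (rule psum_list[OF fin sub(2)])
    ultimately show ?thesis by (simp add: sum.distrib[symmetric] algebra_simps)
  qed
  have same: "psum w G0 + sum_list (map (psum w) gs) = sum_list (map (psum w) NB)"
    using eqNB eqG part P(2) by simp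
  have finG0: "finite G0" using sub(1) fin finite_subset by blast
  have lG0: "min \<mu> \<kappa> \<le> psum w G0"
    using min_psum[OF finG0 _ k0, of p] sub(1) nn G0 unfolding w_def by blast
  have lgs: "\<forall>G\<in>set gs. \<kappa> \<le> psum w G"
  proof
    fix G assume G: "G \<in> set gs"
    have fG: "finite G" using sub(2) G fin finite_subset by blast
    have "min (psum p G) \<kappa> \<le> psum w G"
      using min_psum[OF fG _ k0, of p] sub(2) G nn unfolding w_def by blast
    moreover have "\<kappa> \<le> psum p G" using gs G \<kappa>_def xmu by fastforce
    ultimately show "\<kappa> \<le> psum w G" by simp
  qed
  have "real (length gs) * \<kappa> \<le> sum_list (map (psum w) gs)" by (rule sum_list_bound_ge[OF lgs])
  moreover have "x < min \<mu> \<kappa>" using xmu \<kappa>_def x0 by simp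
  moreover have "real (l - 1) * \<kappa> = real (length gs) * \<kappa>" using l by simp
  ultimately show False using same sumNB lG0 by linarith
qed


lemma greedy_step:
  fixes b y :: "nat \<Rightarrow> real" and c :: real
  assumes m: "1 \<le> m" and N: "m \<le> N + 1" and c: "2 \<le> c"
    and bnn: "\<forall>t<N. 0 \<le> b t" and ynn: "\<forall>i<m. 0 \<le> y i"
    and multi: "\<forall>t<N. \<forall>u<N. \<not> single t \<longrightarrow> b t \<le> c * b u"
    and tot: "(\<Sum>t<N. b t) \<le> (\<Sum>i<m. y i)"
    and sing: "\<forall>A \<beta>. A \<subseteq> {..<N} \<longrightarrow> (\<forall>t\<in>A. single t \<and> \<beta> \<le> b t) \<longrightarrow> (\<Sum>t\<in>A. b t) \<le> (\<Sum>i\<in>{i. i<m \<and> \<beta> \<le> y i}. y i)"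
    and A: "A \<subseteq> {..<N}" and R: "R \<subseteq> {..<N}" and ts: "ts < N"
    and disj: "ts \<notin> A" "ts \<notin> R" "A \<inter> R = {}" and cover: "insert ts (A \<union> R) = {..<N}"
    and cA: "card A = k" and cR: "real (card R) = real N - real k - 1"
    and bA: "\<forall>t\<in>A. b ts \<le> b t"
    and g: "\<forall>t\<in>A. g t < m" and L: "\<forall>i<m. (\<Sum>t\<in>{t\<in>A. g t = i}. b t) \<le> c * y i"
  shows "\<exists>i<m. (\<Sum>t\<in>{t\<in>A. g t = i}. b t) + b ts \<le> c * y i"
proof (rule ccontr)
  assume "\<not> ?thesis"
  then have bad: "\<forall>i<m. c * y i < (\<Sum>t\<in>{t\<in>A. g t = i}. b t) + b ts" by force
  define Ld where "Ld i = (\<Sum>t\<in>{t\<in>A. g t = i}. b t)" for i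
  define bs where "bs = b ts"
  define Pre where "Pre = (\<Sum>t\<in>A. b t)"
  have finA: "finite A" using A finite_subset by blast
  have finR: "finite R" using R finite_subset by blast
  have bs0: "0 \<le> bs" using bnn ts bs_def by simp
  have Lnn: "\<forall>i. 0 \<le> Ld i" unfolding Ld_def using bnn A by (intro allI sum_nonneg) auto
  have sumL: "(\<Sum>i<m. Ld i) = Pre"
    unfolding Ld_def Pre_def using sum.group[OF finA finite_lessThan, where g=g and h=b] g by auto
  have Pre0: "0 \<le> Pre" unfolding Pre_def using bnn A by (intro sum_nonneg) auto
  have Pre_k: "real k * bs \<le> Pre"
  proof -
    have "(\<Sum>t\<in>A. bs) \<le> Pre" unfolding Pre_def bs_def using bA by (intro sum_mono) auto
    then show ?thesis using cA by simp
  qed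
  show False
  proof (cases "\<exists>u\<in>insert ts A. \<not> single u")
    case True
    then obtain u where u: "u \<in> insert ts A" "\<not> single u" by blast
    have uN: "u < N" using u(1) A ts by auto
    have bu: "bs \<le> b u" using u(1) bA bs_def by auto
    have lowv: "\<forall>v<N. bs \<le> c * b v" using multi u(2) uN bu by (meson order_trans)
    define Rest where "Rest = (\<Sum>t\<in>R. b t)"
    have total: "(\<Sum>t<N. b t) = bs + Pre + Rest"
    proof -
      have "(\<Sum>t<N. b t) = (\<Sum>t\<in>insert ts (A \<union> R). b t)" using cover by simp
      also have "\<dots> = b ts + (\<Sum>t\<in>A \<union> R. b t)" using disj finA finR by simp
      also have "\<dots> = b ts + Pre + Rest" using disj finA finR by (simp add: sum.union_disjoint Pre_def Rest_def)
      finally show ?thesis using bs_def by simp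
    qed
    have Rest_low: "real (card R) * bs \<le> c * Rest"
    proof -
      have "(\<Sum>t\<in>R. bs) \<le> (\<Sum>t\<in>R. c * b t)" using lowv R by (intro sum_mono) auto
      then show ?thesis by (simp add: Rest_def sum_distrib_left)
    qed
    have "(\<Sum>i<m. c * y i) < (\<Sum>i<m. Ld i + bs)"
      using bad m unfolding Ld_def bs_def by (intro sum_strict_mono) (auto simp: lessThan_empty_iff)
    then have s1: "c * (\<Sum>i<m. y i) < Pre + real m * bs"
      by (simp add: sum_distrib_left[symmetric] sum.distrib sumL)
    have s2: "c * (bs + Pre + Rest) \<le> c * (\<Sum>i<m. y i)"
      using tot total c by (intro mult_left_mono) auto
    have s3: "2 * Pre \<le> c * Pre" using c Pre0 by (intro mult_right_mono) auto
    have s4: "2 * bs \<le> c * bs" using c bs0 by (intro mult_right_mono) auto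
    have s5: "real m * bs \<le> (real N + 1) * bs" using N bs0 by (intro mult_right_mono) auto
    have s6: "real (card R) * bs = real N * bs - real k * bs - bs" by (simp add: cR algebra_simps)
    show False using s1 s2 s3 s4 s5 s6 Pre_k Rest_low by (simp add: algebra_simps)
  next
    case False
    then have allsing: "\<forall>u\<in>insert ts A. single u" by blast
    define G where "G = {i. i<m \<and> bs \<le> y i}"
    have finG: "finite G" unfolding G_def by simp
    have GS: "Pre + bs \<le> (\<Sum>i\<in>G. y i)"
    proof -
      have "(\<Sum>t\<in>insert ts A. b t) \<le> (\<Sum>i\<in>G. y i)"
        using sing A ts allsing bA unfolding G_def bs_def by (metis insert_subset lessThan_iff order_refl insert_iff)
      then show ?thesis using disj(1) finA by (simp add: Pre_def bs_def)
    qed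
    show False
    proof (cases "G = {}")
      case True
      then have "bs \<le> 0" using GS Pre0 by simp
      then have "bs = 0" using bs0 by simp
      then show False using bad L m unfolding bs_def by force
    next
      case False
      have "(\<Sum>i\<in>G. c * y i) < (\<Sum>i\<in>G. Ld i + bs)"
        using bad finG False unfolding Ld_def bs_def G_def by (intro sum_strict_mono) auto
      then have t1: "c * (\<Sum>i\<in>G. y i) < (\<Sum>i\<in>G. Ld i) + real (card G) * bs"
        by (simp add: sum_distrib_left[symmetric] sum.distrib)
      have t2: "(\<Sum>i\<in>G. Ld i) \<le> Pre"
      proof -
        have "(\<Sum>i\<in>G. Ld i) \<le> (\<Sum>i<m. Ld i)" using Lnn unfolding G_def by (intro sum_mono2) auto
        then show ?thesis using sumL by simp
      qed
      have t3: "real (card G) * bs \<le> (\<Sum>i\<in>G. y i)"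
      proof -
        have "(\<Sum>i\<in>G. bs) \<le> (\<Sum>i\<in>G. y i)" unfolding G_def by (intro sum_mono) auto
        then show ?thesis by simp
      qed
      have t4: "0 \<le> (\<Sum>i\<in>G. y i)" using ynn unfolding G_def by (intro sum_nonneg) auto
      have t5: "2 * (\<Sum>i\<in>G. y i) \<le> c * (\<Sum>i\<in>G. y i)" using c t4 by (intro mult_right_mono) auto
      show False using t1 t2 t3 t5 GS bs0 by linarith
    qed
  qed
qed

lemma greedy_assign:
  fixes b y :: "nat \<Rightarrow> real" and c :: real
  assumes m: "1 \<le> m" and N: "m \<le> N + 1" and c: "2 \<le> c"
    and bnn: "\<forall>t<N. 0 \<le> b t" and ynn: "\<forall>i<m. 0 \<le> y i"
    and multi: "\<forall>t<N. \<forall>u<N. \<not> single t \<longrightarrow> b t \<le> c * b u"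
    and tot: "(\<Sum>t<N. b t) \<le> (\<Sum>i<m. y i)"
    and sing: "\<forall>A \<beta>. A \<subseteq> {..<N} \<longrightarrow> (\<forall>t\<in>A. single t \<and> \<beta> \<le> b t) \<longrightarrow> (\<Sum>t\<in>A. b t) \<le> (\<Sum>i\<in>{i. i<m \<and> \<beta> \<le> y i}. y i)"
  shows "\<exists>g. (\<forall>t<N. g t < m) \<and> (\<forall>i<m. (\<Sum>t\<in>{t. t<N \<and> g t = i}. b t) \<le> c * y i)"
proof -
  define xs where "xs = sort_key (\<lambda>t. - b t) [0..<N]"
  have dxs: "distinct xs" and sxs: "set xs = {..<N}" and lxs: "length xs = N"
    unfolding xs_def by (auto simp: length_sort)
  have srt: "sorted_wrt (\<lambda>u v. - b u \<le> - b v) xs"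
    unfolding xs_def using sorted_sort_key[of "\<lambda>t. - b t" "[0..<N]"] by (simp add: sorted_map)
  have claim: "\<forall>k\<le>N. \<exists>g. (\<forall>t\<in>set (take k xs). g t < m) \<and>
      (\<forall>i<m. (\<Sum>t\<in>{t\<in>set (take k xs). g t = i}. b t) \<le> c * y i)"
  proof (intro allI impI)
    fix k assume "k \<le> N"
    then show "\<exists>g. (\<forall>t\<in>set (take k xs). g t < m) \<and>
      (\<forall>i<m. (\<Sum>t\<in>{t\<in>set (take k xs). g t = i}. b t) \<le> c * y i)"
    proof (induction k)
      case 0
      show ?case using c ynn by (intro exI[of _ "\<lambda>_. 0"]) auto
    next
      case (Suc k)
      then have kN: "k < N" by simp
      obtain g where g: "\<forall>t\<in>set (take k xs). g t < m"
          "\<forall>i<m. (\<Sum>t\<in>{t\<in>set (take k xs). g t = i}. b t) \<le> c * y i"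
        using Suc by auto
      define A where "A = set (take k xs)"
      define R where "R = set (drop (Suc k) xs)"
      define ts where "ts = xs ! k"
      have split: "xs = take k xs @ ts # drop (Suc k) xs" using kN lxs ts_def by (simp add: id_take_nth_drop)
      have dsplit: "distinct (take k xs @ ts # drop (Suc k) xs)" using split dxs by metis
      have disj: "ts \<notin> A" "ts \<notin> R" "A \<inter> R = {}" using dsplit unfolding A_def R_def by auto
      have cover: "insert ts (A \<union> R) = {..<N}"
        using split sxs unfolding A_def R_def by (metis Un_insert_right list.simps(15) set_append)
      have cA: "card A = k" unfolding A_def using dxs kN lxs by (simp add: distinct_card)
      have cR: "card R = N - Suc k" unfolding R_def using dxs lxs by (simp add: distinct_card)
      have cR': "real (card R) = real N - real k - 1" using cR kN by (simp add: of_nat_diff)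
      have srt2: "sorted_wrt (\<lambda>u v. - b u \<le> - b v) (take k xs @ ts # drop (Suc k) xs)"
        using srt split by metis
      have bA: "\<forall>t\<in>A. b ts \<le> b t" using srt2 unfolding A_def by (simp add: sorted_wrt_append)
      have AN: "A \<subseteq> {..<N}" "R \<subseteq> {..<N}" "ts < N" using cover by auto
      obtain i where i: "i < m" "(\<Sum>t\<in>{t\<in>A. g t = i}. b t) + b ts \<le> c * y i"
        using greedy_step[OF m N c bnn ynn multi tot sing AN disj cover cA cR' bA] g unfolding A_def by blast
      define g' where "g' = g(ts := i)"
      have tk: "set (take (Suc k) xs) = insert ts A"
        unfolding A_def ts_def using kN lxs by (simp add: take_Suc_conv_app_nth)
      have finA: "finite A" unfolding A_def by simp
      have sets: "\<And>i'. {t\<in>insert ts A. g' t = i'} = (if i' = i then insert ts {t\<in>A. g t = i'} else {t\<in>A. g t = i'})"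
        using disj(1) unfolding g'_def by auto
      show ?case
      proof (intro exI[of _ g'] conjI ballI allI impI)
        fix t assume "t \<in> set (take (Suc k) xs)"
        then show "g' t < m" using g(1) i(1) tk unfolding g'_def A_def by auto
      next
        fix i' assume i': "i' < m"
        show "(\<Sum>t\<in>{t\<in>set (take (Suc k) xs). g' t = i'}. b t) \<le> c * y i'"
        proof (cases "i' = i")
          case True
          have "(\<Sum>t\<in>{t\<in>set (take (Suc k) xs). g' t = i'}. b t) = b ts + (\<Sum>t\<in>{t\<in>A. g t = i}. b t)"
            using tk sets True disj(1) finA by simp
          then show ?thesis using i True by simp
        next
          case False
          then show ?thesis using tk sets g(2) i' unfolding A_def by simp
        qed
      qed
    qed
  qed
  obtain g where g: "\<forall>t\<in>set xs. g t < m" "\<forall>i<m. (\<Sum>t\<in>{t\<in>set xs. g t = i}. b t) \<le> c * y i"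
    using claim[rule_format, of N] lxs by auto
  show ?thesis using g sxs by (intro exI[of _ g]) auto
qed


lemma cntl_sum: "cntl j xs = (\<Sum>t<length xs. ind j (xs ! t))"
proof (induction xs)
  case Nil then show ?case by simp
next
  case (Cons B xs)
  show ?case using Cons by (simp add: sum.lessThan_Suc_shift del: sum.lessThan_Suc)
qed

lemma sum_list_nth: "sum_list (map f xs) = (\<Sum>t<length xs. f (xs ! t))"
  by (simp add: sum_list_sum_nth atLeast0LessThan)

lemma opt_attained:
  assumes m: "1 \<le> m" and s: "\<forall>i<m. 0 < s i" and p: "\<forall>j<n. 0 \<le> p j"
  shows "\<exists>f\<in>{0..<n} \<rightarrow>\<^sub>E {0..<m}. \<exists>T. 0 \<le> T \<and> opt p s n m = ereal T \<and>
           (\<forall>i<m. (\<Sum>j\<in>{j. j < n \<and> f j = i}. p j) \<le> s i * T)"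
proof -
  define F where "F = (\<lambda>f. Max ((\<lambda>i. ratio (\<Sum>j\<in>{j. j < n \<and> f j = i}. p j) (s i)) ` {0..<m}))"
  have fin: "finite (F ` ({0..<n} \<rightarrow>\<^sub>E {0..<m}))" by (intro finite_imageI finite_PiE) auto
  have ne: "F ` ({0..<n} \<rightarrow>\<^sub>E {0..<m}) \<noteq> {}"
  proof -
    have "(\<lambda>j\<in>{0..<n}. 0) \<in> {0..<n} \<rightarrow>\<^sub>E {0..<m}" using m by auto
    then show ?thesis by blast
  qed
  have "opt p s n m = Min (F ` ({0..<n} \<rightarrow>\<^sub>E {0..<m}))" unfolding opt_def F_def by simp
  then have "opt p s n m \<in> F ` ({0..<n} \<rightarrow>\<^sub>E {0..<m})" using Min_in[OF fin ne] by simp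
  then obtain f where f: "f \<in> {0..<n} \<rightarrow>\<^sub>E {0..<m}" "opt p s n m = F f" by blast
  define ld where "ld i = (\<Sum>j\<in>{j. j < n \<and> f j = i}. p j)" for i
  define T where "T = Max ((\<lambda>i. ld i / s i) ` {0..<m})"
  have finm: "finite {0..<m}" "{0..<m} \<noteq> {}" using m by auto
  have rat: "\<And>i. i < m \<Longrightarrow> ratio (ld i) (s i) = ereal (ld i / s i)"
    using s by (auto simp: ratio_def)
  have "F f = Max ((\<lambda>i. ereal (ld i / s i)) ` {0..<m})"
    unfolding F_def ld_def[symmetric] using rat by (intro arg_cong[where f=Max] image_cong) auto
  also have "\<dots> = Max (ereal ` ((\<lambda>i. ld i / s i) ` {0..<m}))" by (simp add: image_image)
  also have "\<dots> = ereal T" unfolding T_def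
    using mono_Max_commute[of ereal "(\<lambda>i. ld i / s i) ` {0..<m}"] finm
    by (simp add: mono_def)
  finally have optT: "opt p s n m = ereal T" using f(2) by simp
  have le: "\<And>i. i < m \<Longrightarrow> ld i / s i \<le> T" unfolding T_def using finm by (intro Max_ge) auto
  have ldnn: "\<And>i. 0 \<le> ld i" unfolding ld_def using p by (intro sum_nonneg) auto
  have T0: "0 \<le> T" using le[of 0] ldnn[of 0] s m by (meson divide_nonneg_pos less_le_trans order.trans zero_less_one le_less_trans not_le)
  have "\<forall>i<m. ld i \<le> s i * T"
  proof (intro allI impI)
    fix i assume i: "i < m"
    have "ld i / s i \<le> T" using le i by simp
    then show "ld i \<le> s i * T" using s i by (simp add: divide_le_eq mult.commute)
  qed
  then show ?thesis using f(1) optT T0 unfolding ld_def by blast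
qed

lemma robust_from_good:
  assumes m: "1 \<le> m" and s: "\<forall>i<m. 0 < s i" and p: "\<forall>j<n. 0 \<le> p j"
    and len: "length bs = m" and cnt: "\<forall>j. cntl j bs = (if j < n then 1 else 0)"
    and c: "2 \<le> c" and c\<beta>: "c \<le> \<beta>"
    and multi: "\<forall>t<m. \<forall>u<m. 2 \<le> card (bs!t) \<longrightarrow> psum p (bs!t) \<le> c * psum p (bs!u)"
  shows "opt_bags p s m bs \<le> ereal \<beta> * opt p s n m"
proof -
  obtain f T where f: "f \<in> {0..<n} \<rightarrow>\<^sub>E {0..<m}" "0 \<le> T" "opt p s n m = ereal T"
      "\<forall>i<m. (\<Sum>j\<in>{j. j < n \<and> f j = i}. p j) \<le> s i * T"
    using opt_attained[OF m s p] by blast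
  define ld where "ld i = (\<Sum>j\<in>{j. j < n \<and> f j = i}. p j)" for i
  define y where "y i = s i * T" for i
  define b where "b t = psum p (bs ! t)" for t
  have ldy: "\<forall>i<m. ld i \<le> y i" using f(4) unfolding ld_def y_def by simp
  have ynn: "\<forall>i<m. 0 \<le> y i" using s f(2) unfolding y_def by (simp add: less_imp_le)
  have bsub: "\<forall>t<m. bs ! t \<subseteq> {0..<n}"
  proof (intro allI impI subsetI)
    fix t j assume t: "t < m" and j: "j \<in> bs ! t"
    have "cntl j bs \<noteq> 0" using cntl_zero_iff[of j bs] t j len by (metis nth_mem)
    then show "j \<in> {0..<n}" using cnt by (auto split: if_splits)
  qed
  have bsub': "\<forall>B\<in>set bs. B \<subseteq> {0..<n}" using bsub len by (metis in_set_conv_nth)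
  have fint: "\<forall>t<m. finite (bs ! t)" using bsub finite_subset by blast
  have bnn: "\<forall>t<m. 0 \<le> b t"
  proof (intro allI impI)
    fix t assume "t < m"
    then have "\<forall>j\<in>bs!t. 0 \<le> p j" using bsub p by (meson atLeastLessThan_iff subsetD)
    then show "0 \<le> b t" unfolding b_def by (rule psum_nonneg)
  qed
  have fmap: "\<forall>j<n. f j < m" using f(1) by auto
  have tot: "(\<Sum>t<m. b t) \<le> (\<Sum>i<m. y i)"
  proof -
    have "(\<Sum>t<m. b t) = sum_list (map (psum p) bs)" unfolding b_def using len by (simp add: sum_list_nth)
    also have "\<dots> = (\<Sum>j\<in>{0..<n}. p j * real (cntl j bs))" by (rule psum_list[OF _ bsub']) simp
    also have "\<dots> = (\<Sum>j\<in>{0..<n}. p j)" using cnt by (intro sum.cong) auto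
    also have "\<dots> = (\<Sum>i\<in>{0..<m}. ld i)"
      unfolding ld_def using sum.group[of "{0..<n}" "{0..<m}" f p] fmap by (auto simp: atLeast0LessThan image_subset_iff)
    also have "\<dots> \<le> (\<Sum>i<m. y i)" using ldy by (simp add: atLeast0LessThan) (intro sum_mono, auto)
    finally show ?thesis .
  qed
  have sing: "\<forall>A \<beta>'. A \<subseteq> {..<m} \<longrightarrow> (\<forall>t\<in>A. \<not> 2 \<le> card (bs!t) \<and> \<beta>' \<le> b t) \<longrightarrow>
      (\<Sum>t\<in>A. b t) \<le> (\<Sum>i\<in>{i. i<m \<and> \<beta>' \<le> y i}. y i)"
  proof (intro allI impI)
    fix A \<beta>' assume A: "A \<subseteq> {..<m}" and As: "\<forall>t\<in>A. \<not> 2 \<le> card (bs!t) \<and> \<beta>' \<le> b t"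
    define G where "G = {i. i<m \<and> \<beta>' \<le> y i}"
    define cA where "cA j = (\<Sum>t\<in>A. ind j (bs ! t))" for j
    have finA: "finite A" using A finite_subset by blast
    have cA1: "\<And>j. cA j \<le> cntl j bs"
    proof -
      fix j
      have "cA j \<le> (\<Sum>t<m. ind j (bs ! t))" unfolding cA_def using A by (intro sum_mono2) auto
      then show "cA j \<le> cntl j bs" using len by (simp add: cntl_sum)
    qed
    have "(\<Sum>t\<in>A. b t) = (\<Sum>t\<in>A. \<Sum>j\<in>{0..<n}. p j * real (ind j (bs ! t)))"
      unfolding b_def using A bsub by (intro sum.cong refl psum_as_sum) auto
    also have "\<dots> = (\<Sum>j\<in>{0..<n}. p j * real (cA j))"
      unfolding cA_def by (simp add: sum.swap[of _ A] sum_distrib_left)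
    also have "\<dots> \<le> (\<Sum>j\<in>{0..<n}. if f j \<in> G then p j else 0)"
    proof (intro sum_mono)
      fix j assume j: "j \<in> {0..<n}"
      have "cA j \<le> 1" using cA1[of j] cnt j by (metis atLeastLessThan_iff)
      show "p j * real (cA j) \<le> (if f j \<in> G then p j else 0)"
      proof (cases "cA j = 0")
        case True then show ?thesis using p j by auto
      next
        case False
        then have c1: "cA j = 1" using \<open>cA j \<le> 1\<close> by simp
        have "\<exists>t\<in>A. ind j (bs ! t) \<noteq> 0"
        proof (rule ccontr)
          assume "\<not> (\<exists>t\<in>A. ind j (bs ! t) \<noteq> 0)"
          then have "\<forall>x\<in>A. ind j (bs ! x) = 0" by auto
          then have "cA j = 0" unfolding cA_def by (intro sum.neutral) auto
          then show False using False by simp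
        qed
        then obtain t where t: "t \<in> A" "j \<in> bs ! t" by (auto split: if_splits)
        have tm: "t < m" using t A by auto
        have "bs ! t = {j}"
        proof -
          have "\<not> 2 \<le> card (bs ! t)" using As t(1) by blast
          then have "card (bs ! t) \<le> 1" by simp
          moreover have fin: "finite (bs ! t)" using fint tm by blast
          ultimately have "\<forall>a\<in>bs ! t. \<forall>b\<in>bs ! t. a = b" using card_le_Suc0_iff_eq[OF fin] by simp
          then show ?thesis using t(2) by blast
        qed
        moreover have "\<beta>' \<le> b t" using As t(1) by blast
        ultimately have "\<beta>' \<le> p j" unfolding b_def by (simp add: psum_def)
        moreover have "p j \<le> ld (f j)"
        proof -
          have "p j = psum p {j}" by (simp add: psum_def)
          also have "\<dots> \<le> ld (f j)" unfolding ld_def psum_def[symmetric]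
            using j p by (intro psum_mono) auto
          finally show ?thesis .
        qed
        moreover have "f j < m" using fmap j by simp
        ultimately have "f j \<in> G" unfolding G_def using ldy by force
        then show ?thesis using c1 by simp
      qed
    qed
    also have "\<dots> = (\<Sum>j\<in>{j\<in>{0..<n}. f j \<in> G}. p j)" by (rule sum.inter_filter[symmetric]) simp
    also have "\<dots> = (\<Sum>i\<in>G. ld i)"
    proof -
      have "(\<Sum>i\<in>G. \<Sum>j\<in>{x. x \<in> {j\<in>{0..<n}. f j \<in> G} \<and> f x = i}. p j) = (\<Sum>j\<in>{j\<in>{0..<n}. f j \<in> G}. p j)"
        by (rule sum.group) (auto simp: G_def)
      moreover have "\<And>i. i \<in> G \<Longrightarrow> {x. x \<in> {j\<in>{0..<n}. f j \<in> G} \<and> f x = i} = {j. j < n \<and> f j = i}"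
        by auto
      ultimately show ?thesis unfolding ld_def by simp
    qed
    also have "\<dots> \<le> (\<Sum>i\<in>G. y i)" using ldy unfolding G_def by (intro sum_mono) auto
    finally show "(\<Sum>t\<in>A. b t) \<le> (\<Sum>i\<in>{i. i<m \<and> \<beta>' \<le> y i}. y i)" unfolding G_def .
  qed
  have multi': "\<forall>t<m. \<forall>u<m. \<not> \<not> 2 \<le> card (bs!t) \<longrightarrow> b t \<le> c * b u"
    using multi unfolding b_def by simp
  obtain g where g: "\<forall>t<m. g t < m" "\<forall>i<m. (\<Sum>t\<in>{t. t<m \<and> g t = i}. b t) \<le> c * y i"
    using greedy_assign[OF m _ c bnn ynn multi' tot sing] by auto
  define g' where "g' = (\<lambda>t. if t < m then g t else undefined)"
  have g'P: "g' \<in> {0..<length bs} \<rightarrow>\<^sub>E {0..<m}" using g(1) len unfolding g'_def by auto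
  define V where "V = Max ((\<lambda>i. ratio (\<Sum>t\<in>{t. t < length bs \<and> g' t = i}. psum p (bs ! t)) (s i)) ` {0..<m})"
  have "opt_bags p s m bs \<le> V" unfolding opt_bags_def V_def
    by (rule Min_le) (use g'P in \<open>auto intro: finite_PiE\<close>)
  also have "V \<le> ereal (c * T)" unfolding V_def
  proof (rule Max.boundedI, simp, use m in simp)
    fix r assume "r \<in> (\<lambda>i. ratio (\<Sum>t\<in>{t. t < length bs \<and> g' t = i}. psum p (bs ! t)) (s i)) ` {0..<m}"
    then obtain i where i: "i < m" "r = ratio (\<Sum>t\<in>{t. t < length bs \<and> g' t = i}. psum p (bs ! t)) (s i)" by auto
    have eqs: "(\<Sum>t\<in>{t. t < length bs \<and> g' t = i}. psum p (bs ! t)) = (\<Sum>t\<in>{t. t<m \<and> g t = i}. b t)"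
      unfolding b_def g'_def using len by (intro sum.cong) auto
    have le: "(\<Sum>t\<in>{t. t<m \<and> g t = i}. b t) \<le> c * (s i * T)" using g(2) i(1) unfolding y_def by simp
    have si: "0 < s i" using s i by simp
    have "r = ereal ((\<Sum>t\<in>{t. t<m \<and> g t = i}. b t) / s i)" using i(2) eqs si by (simp add: ratio_def)
    also have "\<dots> \<le> ereal (c * T)" using le si by (simp add: divide_le_eq algebra_simps)
    finally show "r \<le> ereal (c * T)" .
  qed
  also have "\<dots> \<le> ereal (\<beta> * T)" using c\<beta> f(2) by (simp add: mult_right_mono)
  also have "\<dots> = ereal \<beta> * opt p s n m" using f(3) by simp
  finally show ?thesis .
qed


lemma bagpos_Sigma: "bagpos m M = Sigma {..<m} (\<lambda>k. {..<length (M k)})"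
  by (auto simp: bagpos_def)

lemma finite_bagpos: "finite (bagpos m M)"
  unfolding bagpos_Sigma by (intro finite_SigmaI) auto

lemma bagpos_iff: "(k, t) \<in> bagpos m M \<longleftrightarrow> k < m \<and> t < length (M k)"
  by (simp add: bagpos_def)

lemma ball_bagpos: "(\<forall>q\<in>bagpos m M. P (bag M q)) \<longleftrightarrow> (\<forall>k<m. \<forall>B\<in>set (M k). P B)"
proof
  assume H: "\<forall>q\<in>bagpos m M. P (bag M q)"
  show "\<forall>k<m. \<forall>B\<in>set (M k). P B"
  proof (intro allI impI ballI)
    fix k B assume "k < m" "B \<in> set (M k)"
    then obtain t where "t < length (M k)" "B = M k ! t" by (auto simp: in_set_conv_nth)
    then show "P B" using H \<open>k < m\<close> by (auto simp: bagpos_def bag_def)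
  qed
next
  assume H: "\<forall>k<m. \<forall>B\<in>set (M k). P B"
  show "\<forall>q\<in>bagpos m M. P (bag M q)"
  proof
    fix q assume "q \<in> bagpos m M"
    then have "fst q < m" "snd q < length (M (fst q))" by (auto simp: bagpos_def)
    then show "P (bag M q)" using H unfolding bag_def by (meson nth_mem)
  qed
qed

lemma rebalance_unfold:
  assumes "lpt_rebalance p m M M'"
  obtains k0 t0 k1 t1 NB where "k0 < m" "t0 < length (M k0)" "k1 < m" "t1 < length (M k1)"
   "\<forall>k<m. \<forall>B\<in>set (M k). psum p (M k0 ! t0) \<le> psum p B"
   "2 \<le> card (M k1 ! t1)"
   "\<forall>k<m. \<forall>B\<in>set (M k). 2 \<le> card B \<longrightarrow> psum p B \<le> psum p (M k1 ! t1)"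
   "lpt p (M k0 ! t0 \<union> \<Union>(set ((M(k0 := remove_nth t0 (M k0))) k1))) (length ((M(k0 := remove_nth t0 (M k0))) k1) + 1) NB"
   "M' = (M(k0 := remove_nth t0 (M k0)))(k1 := NB)"
proof -
  obtain k0 t0 k1 t1 NB where H:
    "(k0, t0) \<in> bagpos m M" "\<forall>q\<in>bagpos m M. psum p (bag M (k0, t0)) \<le> psum p (bag M q)"
    "(k1, t1) \<in> bagpos m M" "card (bag M (k1, t1)) \<ge> 2"
    "\<forall>q\<in>bagpos m M. card (bag M q) \<ge> 2 \<longrightarrow> psum p (bag M q) \<le> psum p (bag M (k1, t1))"
    "lpt p (M k0 ! t0 \<union> \<Union>(set ((M(k0 := remove_nth t0 (M k0))) k1))) (length ((M(k0 := remove_nth t0 (M k0))) k1) + 1) NB"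
    "M' = (M(k0 := remove_nth t0 (M k0)))(k1 := NB)"
    using assms unfolding lpt_rebalance_def Let_def by (auto simp: bag_def)
  have a: "\<forall>k<m. \<forall>B\<in>set (M k). psum p (M k0 ! t0) \<le> psum p B"
    using H(2) ball_bagpos[of m M "\<lambda>B. psum p (M k0 ! t0) \<le> psum p B"] by (simp add: bag_def)
  have b: "\<forall>k<m. \<forall>B\<in>set (M k). 2 \<le> card B \<longrightarrow> psum p B \<le> psum p (M k1 ! t1)"
    using H(5) ball_bagpos[of m M "\<lambda>B. 2 \<le> card B \<longrightarrow> psum p B \<le> psum p (M k1 ! t1)"] by (simp add: bag_def)
  show ?thesis
    using that[of k0 t0 k1 t1 NB] H(1,3,4,6,7) a b by (simp add: bagpos_iff bag_def)
qed

lemma loop_cond_D: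
  assumes lc: "loop_cond p m \<rho> M" and k0: "k0 < m" "t0 < length (M k0)" and k1: "k1 < m" "t1 < length (M k1)"
    and c2: "2 \<le> card (M k1 ! t1)"
    and mn: "\<forall>k<m. \<forall>B\<in>set (M k). psum p (M k0 ! t0) \<le> psum p B"
    and mx: "\<forall>k<m. \<forall>B\<in>set (M k). 2 \<le> card B \<longrightarrow> psum p B \<le> psum p (M k1 ! t1)"
  shows "\<rho> * psum p (M k0 ! t0) < psum p (M k1 ! t1)"
proof -
  let ?P = "bagpos m M"
  let ?Big = "{q \<in> ?P. card (bag M q) \<ge> 2}"
  have finP: "finite ?P" by (rule finite_bagpos)
  have finB: "finite ?Big" using finP by simp
  have in1: "(k1, t1) \<in> ?Big" using k1 c2 by (simp add: bagpos_iff bag_def)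
  have in0: "(k0, t0) \<in> ?P" using k0 by (simp add: bagpos_iff)
  have mx': "\<forall>q\<in>?Big. psum p (bag M q) \<le> psum p (M k1 ! t1)"
    using mx ball_bagpos[of m M "\<lambda>B. 2 \<le> card B \<longrightarrow> psum p B \<le> psum p (M k1 ! t1)"] by auto
  have mn': "\<forall>q\<in>?P. psum p (M k0 ! t0) \<le> psum p (bag M q)"
    using mn ball_bagpos[of m M "\<lambda>B. psum p (M k0 ! t0) \<le> psum p B"] by auto
  have mem1: "psum p (M k1 ! t1) \<in> (\<lambda>q. psum p (bag M q)) ` ?Big"
    using in1 by (intro image_eqI[where x="(k1,t1)"]) (auto simp: bag_def)
  have mem0: "psum p (M k0 ! t0) \<in> (\<lambda>q. psum p (bag M q)) ` ?P"
    using in0 by (intro image_eqI[where x="(k0,t0)"]) (auto simp: bag_def)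
  have MX: "Max ((\<lambda>q. psum p (bag M q)) ` ?Big) = psum p (M k1 ! t1)"
    using finB mem1 mx' by (intro Max_eqI) auto
  have MN: "Min ((\<lambda>q. psum p (bag M q)) ` ?P) = psum p (M k0 ! t0)"
    using finP mem0 mn' by (intro Min_eqI) auto
  show ?thesis using lc MX MN unfolding loop_cond_def Let_def by simp
qed

lemma loop_stop_bound:
  assumes "\<not> loop_cond p m \<rho> M" and r0: "0 \<le> \<rho>"
  shows "\<forall>k<m. \<forall>A\<in>set (M k). \<forall>k'<m. \<forall>B\<in>set (M k'). 2 \<le> card A \<longrightarrow> psum p A \<le> \<rho> * psum p B"
proof (intro allI impI ballI)
  fix k A k' B assume k: "k < m" and A: "A \<in> set (M k)" and k': "k' < m" and B: "B \<in> set (M k')" and c: "2 \<le> card A"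
  let ?P = "bagpos m M"
  let ?Big = "{q \<in> ?P. card (bag M q) \<ge> 2}"
  obtain t where t: "t < length (M k)" "A = M k ! t" using A by (auto simp: in_set_conv_nth)
  obtain t' where t': "t' < length (M k')" "B = M k' ! t'" using B by (auto simp: in_set_conv_nth)
  have inA: "(k, t) \<in> ?Big" using k t c by (simp add: bagpos_iff bag_def)
  have inB: "(k', t') \<in> ?P" using k' t' by (simp add: bagpos_iff)
  have finP: "finite ?P" by (rule finite_bagpos)
  have "Max ((\<lambda>q. psum p (bag M q)) ` ?Big) \<le> \<rho> * Min ((\<lambda>q. psum p (bag M q)) ` ?P)"
    using assms inA unfolding loop_cond_def Let_def by auto
  moreover have "psum p A \<le> Max ((\<lambda>q. psum p (bag M q)) ` ?Big)"
  proof (rule Max_ge)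
    show "finite ((\<lambda>q. psum p (bag M q)) ` ?Big)" using finP by simp
    show "psum p A \<in> (\<lambda>q. psum p (bag M q)) ` ?Big"
      using inA t by (intro image_eqI[where x="(k,t)"]) (auto simp: bag_def)
  qed
  moreover have "Min ((\<lambda>q. psum p (bag M q)) ` ?P) \<le> psum p B"
  proof (rule Min_le)
    show "finite ((\<lambda>q. psum p (bag M q)) ` ?P)" using finP by simp
    show "psum p B \<in> (\<lambda>q. psum p (bag M q)) ` ?P"
      using inB t' by (intro image_eqI[where x="(k',t')"]) (auto simp: bag_def)
  qed
  ultimately show "psum p A \<le> \<rho> * psum p B"
    using mult_left_mono[OF _ r0] by (meson order_trans)
qed


definition Lk :: "(nat \<Rightarrow> real) \<Rightarrow> (nat \<Rightarrow> nat set list) \<Rightarrow> nat \<Rightarrow> real" where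
  "Lk p M k = sum_list (map (psum p) (M k))"

definition Bas :: "nat \<Rightarrow> nat \<Rightarrow> (nat \<Rightarrow> nat set list) \<Rightarrow> bool" where
  "Bas n m M \<longleftrightarrow> (\<Sum>k<m. length (M k)) = m \<and> (\<forall>j. (\<Sum>k<m. cntl j (M k)) = (if j < n then 1 else 0))"

definition Fin :: "(nat \<Rightarrow> real) \<Rightarrow> nat \<Rightarrow> (nat \<Rightarrow> real) \<Rightarrow> real \<Rightarrow> real \<Rightarrow> (nat \<Rightarrow> nat set list) \<Rightarrow> bool" where
  "Fin p m sh a Oc M \<longleftrightarrow>
   (\<forall>k<m. Lk p M k \<le> a * Oc * sh k) \<and>
   (\<forall>k<m. \<forall>A\<in>set (M k). \<forall>B\<in>set (M k). 2 \<le> card A \<longrightarrow> psum p A \<le> 2 * psum p B) \<and>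
   (\<forall>k<m. \<forall>A\<in>set (M k). 2 \<le> card A \<longrightarrow> real (length (M k)) * psum p A \<le> 2 * a * Oc * sh k) \<and>
   (\<exists>\<nu>. (\<forall>k<m. \<forall>B\<in>set (M k). \<nu> \<le> psum p B) \<and>
        (\<forall>k<m. M k \<noteq> [] \<longrightarrow> Lk p M k \<le> Oc * sh k + (real (length (M k)) - 1) * \<nu>))"

lemma len_all_bags: "length (all_bags m M) = (\<Sum>k<m. length (M k))"
  by (induction m) (auto simp: all_bags_def)

lemma cntl_all_bags: "cntl j (all_bags m M) = (\<Sum>k<m. cntl j (M k))"
  by (induction m) (auto simp: all_bags_def)

lemma set_all_bags: "set (all_bags m M) = (\<Union>k<m. set (M k))"
  by (auto simp: all_bags_def)

lemma sum_upd:
  fixes f :: "nat set list \<Rightarrow> 'b::comm_monoid_add" and M :: "nat \<Rightarrow> nat set list"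
  assumes "a < m"
  shows "(\<Sum>k<m. f ((M(a := v)) k)) + f (M a) = (\<Sum>k<m. f (M k)) + f v"
proof -
  have rem: "\<And>F. (\<Sum>k<m. F k) = F a + (\<Sum>k\<in>{..<m} - {a}. F k)"
    by (rule sum.remove) (use assms in auto)
  have "(\<Sum>k<m. f ((M(a := v)) k)) = f v + (\<Sum>k\<in>{..<m} - {a}. f ((M(a := v)) k))"
    using rem[of "\<lambda>k. f ((M(a := v)) k)"] by simp
  also have "(\<Sum>k\<in>{..<m} - {a}. f ((M(a := v)) k)) = (\<Sum>k\<in>{..<m} - {a}. f (M k))"
    by (intro sum.cong) auto
  finally have 1: "(\<Sum>k<m. f ((M(a := v)) k)) = f v + (\<Sum>k\<in>{..<m} - {a}. f (M k))" .
  have 2: "(\<Sum>k<m. f (M k)) = f (M a) + (\<Sum>k\<in>{..<m} - {a}. f (M k))"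
    using rem[of "\<lambda>k. f (M k)"] by simp
  show ?thesis unfolding 1 2 by (simp add: ac_simps)
qed

lemma Bas_sub: "Bas n m M \<Longrightarrow> k < m \<Longrightarrow> B \<in> set (M k) \<Longrightarrow> B \<subseteq> {..<n}"
proof
  fix j assume bas: "Bas n m M" and k: "k < m" and B: "B \<in> set (M k)" and j: "j \<in> B"
  have "cntl j (M k) \<noteq> 0" using cntl_zero_iff B j by blast
  moreover have "cntl j (M k) \<le> (\<Sum>k<m. cntl j (M k))" using k by (intro member_le_sum) auto
  ultimately have "(\<Sum>k<m. cntl j (M k)) \<noteq> 0" by linarith
  then show "j \<in> {..<n}" using bas unfolding Bas_def by (auto split: if_splits)
qed

lemma Bas_psum_nonneg: "Bas n m M \<Longrightarrow> \<forall>j<n. 0 \<le> p j \<Longrightarrow> k < m \<Longrightarrow> B \<in> set (M k) \<Longrightarrow> 0 \<le> psum p B"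
  using Bas_sub by (metis lessThan_iff psum_nonneg subsetD)

lemma Lk_nonneg: "Bas n m M \<Longrightarrow> \<forall>j<n. 0 \<le> p j \<Longrightarrow> k < m \<Longrightarrow> 0 \<le> Lk p M k"
  unfolding Lk_def using Bas_psum_nonneg by (intro sum_list_nonneg) fastforce

lemma ratio_le_iff: "0 \<le> x \<Longrightarrow> 0 \<le> y \<Longrightarrow> 0 \<le> z \<Longrightarrow> ratio x y \<le> ereal z \<longleftrightarrow> x \<le> z * y"
  by (cases "y = 0") (auto simp: ratio_def divide_le_eq)

lemma pred_le_iff:
  assumes "1 \<le> m"
  shows "pred_makespan p m sh M \<le> ereal z \<longleftrightarrow> (\<forall>k<m. ratio (Lk p M k) (sh k) \<le> ereal z)"
proof -
  have "finite ((\<lambda>k. ratio (sum_list (map (psum p) (M k))) (sh k)) ` {0..<m})" by simp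
  moreover have "((\<lambda>k. ratio (sum_list (map (psum p) (M k))) (sh k)) ` {0..<m}) \<noteq> {}" using assms by simp
  ultimately show ?thesis unfolding pred_makespan_def Lk_def by (auto simp: Max_le_iff atLeast0LessThan)
qed


lemma step_facts:
  fixes M M' :: "nat \<Rightarrow> nat set list"
  assumes m1: "1 \<le> m" and p: "\<forall>j<n. 0 \<le> p j" and sh: "\<forall>k<m. 0 \<le> sh k"
    and bas: "Bas n m M" and lc: "loop_cond p m 4 M" and rb: "lpt_rebalance p m M M'"
  shows "Bas n m M' \<and>
    (0 \<le> Oc \<longrightarrow> 1 \<le> a \<longrightarrow> Fin p m sh a Oc M \<longrightarrow> \<not> pred_makespan p m sh M' > ereal a * ereal Oc \<longrightarrow> Fin p m sh a Oc M') \<and>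
    (0 \<le> Oc \<longrightarrow> 1 < a \<longrightarrow> Fin p m sh a Oc M \<longrightarrow> pred_makespan p m sh M' > ereal a * ereal Oc \<longrightarrow>
       (\<forall>k<m. \<forall>A\<in>set (M k). \<forall>k'<m. \<forall>B\<in>set (M k'). 2 \<le> card A \<longrightarrow> psum p A \<le> (2 * a / (a - 1)) * psum p B))"
proof -
  obtain k0 t0 k1 t1 NB where
    k0: "k0 < m" "t0 < length (M k0)" and k1: "k1 < m" "t1 < length (M k1)"
    and mn: "\<forall>k<m. \<forall>B\<in>set (M k). psum p (M k0 ! t0) \<le> psum p B"
    and c2: "2 \<le> card (M k1 ! t1)"
    and mx: "\<forall>k<m. \<forall>B\<in>set (M k). 2 \<le> card B \<longrightarrow> psum p B \<le> psum p (M k1 ! t1)"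
    and lp: "lpt p (M k0 ! t0 \<union> \<Union>(set ((M(k0 := remove_nth t0 (M k0))) k1))) (length ((M(k0 := remove_nth t0 (M k0))) k1) + 1) NB"
    and M': "M' = (M(k0 := remove_nth t0 (M k0)))(k1 := NB)"
    using rebalance_unfold[OF rb] by blast
  define Bm where "Bm = M k0 ! t0"
  define Dm where "Dm = M k1 ! t1"
  define \<mu> where "\<mu> = psum p Bm"
  define D where "D = psum p Dm"
  define Mr where "Mr = M(k0 := remove_nth t0 (M k0))"
  define pool where "pool = Bm \<union> \<Union>(set (Mr k1))"
  define l where "l = length (Mr k1) + 1"
  have lp': "lpt p pool l NB" using lp unfolding pool_def l_def Mr_def Bm_def .
  have M'': "M' = Mr(k1 := NB)" using M' Mr_def by simp
  have D4: "4 * \<mu> < D" using loop_cond_D[OF lc k0 k1 c2 mn mx] unfolding \<mu>_def D_def Bm_def Dm_def .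
  have Bm_in: "Bm \<in> set (M k0)" using k0 Bm_def by simp
  have Dm_in: "Dm \<in> set (M k1)" using k1 Dm_def by simp
  have subM: "\<forall>k<m. \<forall>B\<in>set (M k). B \<subseteq> {..<n}" using Bas_sub[OF bas] by blast
  have nnM: "\<forall>k<m. \<forall>B\<in>set (M k). 0 \<le> psum p B" using Bas_psum_nonneg[OF bas p] by blast
  have \<mu>0: "0 \<le> \<mu>" using nnM k0 Bm_in \<mu>_def by blast
  have mn': "\<forall>k<m. \<forall>B\<in>set (M k). \<mu> \<le> psum p B" using mn unfolding \<mu>_def Bm_def .
  have mx': "\<forall>k<m. \<forall>B\<in>set (M k). 2 \<le> card B \<longrightarrow> psum p B \<le> D" using mx unfolding D_def Dm_def .
  have Mr_k: "\<And>k. Mr k = (if k = k0 then remove_nth t0 (M k0) else M k)" unfolding Mr_def by simp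
  have setMr: "\<And>k. set (Mr k) \<subseteq> set (M k)" using Mr_k set_remove_nth by (metis order_refl)
  have M'_k: "\<And>k. M' k = (if k = k1 then NB else Mr k)" using M'' by simp
  have poolsub: "pool \<subseteq> {..<n}" using subM k0 Bm_in setMr k1 unfolding pool_def by blast
  have finpool: "finite pool" using poolsub finite_subset by blast
  have nnpool: "\<forall>j\<in>pool. 0 \<le> p j" using poolsub p by auto
  note NBp = lpt_props[OF lp' finpool nnpool]
  have lenNB: "length NB = l" using NBp(1) .
  have c1: "\<And>j. (\<Sum>k<m. cntl j (Mr k)) + ind j Bm = (\<Sum>k<m. cntl j (M k))"
  proof -
    fix j
    have "(\<Sum>k<m. cntl j (Mr k)) + cntl j (M k0) = (\<Sum>k<m. cntl j (M k)) + cntl j (remove_nth t0 (M k0))"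
      unfolding Mr_def by (rule sum_upd[OF k0(1)])
    moreover have "cntl j (remove_nth t0 (M k0)) + ind j Bm = cntl j (M k0)"
      using cntl_remove_nth[OF k0(2)] Bm_def by simp
    ultimately show "(\<Sum>k<m. cntl j (Mr k)) + ind j Bm = (\<Sum>k<m. cntl j (M k))" by linarith
  qed
  have le1: "\<And>j. (\<Sum>k<m. cntl j (M k)) \<le> 1" using bas unfolding Bas_def by simp
  have cpart: "\<And>j. ind j Bm + cntl j (Mr k1) = ind j pool"
  proof -
    fix j
    have a: "cntl j (Mr k1) \<le> (\<Sum>k<m. cntl j (Mr k))" using k1 by (intro member_le_sum) auto
    have b: "ind j Bm + cntl j (Mr k1) \<le> 1" using a c1[of j] le1[of j] by linarith
    have c: "j \<in> pool \<longleftrightarrow> j \<in> Bm \<or> cntl j (Mr k1) \<noteq> 0" unfolding pool_def by (auto simp: cntl_zero_iff)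
    show "ind j Bm + cntl j (Mr k1) = ind j pool"
    proof (cases "j \<in> Bm")
      case True then show ?thesis using b c by simp
    next
      case False then show ?thesis using b c by auto
    qed
  qed
  have c3: "\<And>j. (\<Sum>k<m. cntl j (M' k)) + cntl j (Mr k1) = (\<Sum>k<m. cntl j (Mr k)) + cntl j NB"
    unfolding M'' by (rule sum_upd[OF k1(1)])
  have basM': "Bas n m M'"
  proof -
    have lenA: "(\<Sum>k<m. length (Mr k)) + length (M k0) = (\<Sum>k<m. length (M k)) + length (remove_nth t0 (M k0))"
      unfolding Mr_def by (rule sum_upd[OF k0(1)])
    have lenB: "(\<Sum>k<m. length (M' k)) + length (Mr k1) = (\<Sum>k<m. length (Mr k)) + length NB"
      unfolding M'' by (rule sum_upd[OF k1(1)])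
    have lenC: "length (remove_nth t0 (M k0)) + 1 = length (M k0)" using k0(2) by (simp add: length_remove_nth)
    have lm: "(\<Sum>k<m. length (M k)) = m" using bas unfolding Bas_def by simp
    have "(\<Sum>k<m. length (M' k)) = m" using lenA lenB lenC lm lenNB l_def by linarith
    moreover have "\<forall>j. (\<Sum>k<m. cntl j (M' k)) = (if j < n then 1 else 0)"
    proof
      fix j
      have e1: "cntl j NB = ind j pool" using NBp(2) by blast
      have e2: "(\<Sum>k<m. cntl j (M k)) = (if j < n then 1 else 0)" using bas unfolding Bas_def by blast
      show "(\<Sum>k<m. cntl j (M' k)) = (if j < n then 1 else 0)"
        using c1[of j] cpart[of j] c3[of j] e1 e2 by linarith
    qed
    ultimately show ?thesis unfolding Bas_def by blast
  qed
  have subNB: "\<forall>B\<in>set NB. B \<subseteq> {..<n}" using NBp(3) poolsub by blast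
  have subMr: "\<forall>B\<in>set (Mr k1). B \<subseteq> {..<n}" using setMr subM k1 by blast
  have LNB: "Lk p M' k1 = \<mu> + sum_list (map (psum p) (Mr k1))"
  proof -
    have "Lk p M' k1 = (\<Sum>j\<in>{..<n}. p j * real (cntl j NB))"
      unfolding Lk_def using M'_k psum_list[OF finite_lessThan subNB] by simp
    also have "\<dots> = (\<Sum>j\<in>{..<n}. p j * real (ind j Bm) + p j * real (cntl j (Mr k1)))"
    proof (intro sum.cong refl)
      fix j
      have "real (cntl j NB) = real (ind j Bm) + real (cntl j (Mr k1))"
        using NBp(2) cpart[of j] by (metis of_nat_add)
      then show "p j * real (cntl j NB) = p j * real (ind j Bm) + p j * real (cntl j (Mr k1))"
        by (simp add: algebra_simps)
    qed
    also have "\<dots> = \<mu> + sum_list (map (psum p) (Mr k1))"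
    proof -
      have "\<mu> = (\<Sum>j\<in>{..<n}. p j * real (ind j Bm))"
        unfolding \<mu>_def by (rule psum_as_sum) (use subM k0 Bm_in in auto)
      moreover have "sum_list (map (psum p) (Mr k1)) = (\<Sum>j\<in>{..<n}. p j * real (cntl j (Mr k1)))"
        by (rule psum_list[OF finite_lessThan subMr])
      ultimately show ?thesis by (simp add: sum.distrib)
    qed
    finally show ?thesis .
  qed
  have rmL: "sum_list (map (psum p) (remove_nth t0 (M k0))) = Lk p M k0 - \<mu>"
    using sum_list_remove_nth[OF k0(2), of "psum p"] unfolding Lk_def \<mu>_def Bm_def by simp
  have LMr: "sum_list (map (psum p) (Mr k1)) = (if k1 = k0 then Lk p M k0 - \<mu> else Lk p M k1)"
    using rmL Mr_k unfolding Lk_def by simp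
  have Lother: "\<And>k. k \<noteq> k1 \<Longrightarrow> Lk p M' k = (if k = k0 then Lk p M k0 - \<mu> else Lk p M k)"
    using rmL M'_k Mr_k unfolding Lk_def by simp
  have lenM'k1: "length (M' k1) = length (Mr k1) + 1" using M'_k lenNB l_def by simp
  have lenMr: "\<And>k. length (Mr k) = (if k = k0 then length (M k0) - 1 else length (M k))"
    using Mr_k k0(2) length_remove_nth by auto
  have LkM'nn: "\<And>k. k < m \<Longrightarrow> 0 \<le> Lk p M' k" using Lk_nonneg[OF basM' p] by blast
  have LkMnn: "\<And>k. k < m \<Longrightarrow> 0 \<le> Lk p M k" using Lk_nonneg[OF bas p] by blast
  have pw: "\<forall>A\<in>set NB. \<forall>B\<in>set NB. 2 \<le> card A \<longrightarrow> psum p A \<le> 2 * psum p B"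
    by (rule lpt_pairwise[OF lp' finpool nnpool])
  have part2: "0 \<le> Oc \<longrightarrow> 1 \<le> a \<longrightarrow> Fin p m sh a Oc M \<longrightarrow> \<not> pred_makespan p m sh M' > ereal a * ereal Oc \<longrightarrow> Fin p m sh a Oc M'"
  proof (intro impI)
    assume Oc: "0 \<le> Oc" and a1: "1 \<le> a" and fin: "Fin p m sh a Oc M"
      and ng: "\<not> pred_makespan p m sh M' > ereal a * ereal Oc"
    have F1: "\<forall>k<m. Lk p M k \<le> a * Oc * sh k"
     and F2: "\<forall>k<m. \<forall>A\<in>set (M k). \<forall>B\<in>set (M k). 2 \<le> card A \<longrightarrow> psum p A \<le> 2 * psum p B"
     and F3: "\<forall>k<m. \<forall>A\<in>set (M k). 2 \<le> card A \<longrightarrow> real (length (M k)) * psum p A \<le> 2 * a * Oc * sh k"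
      using fin unfolding Fin_def by blast+
    obtain \<nu> where F4a: "\<forall>k<m. \<forall>B\<in>set (M k). \<nu> \<le> psum p B"
      and F4b: "\<forall>k<m. M k \<noteq> [] \<longrightarrow> Lk p M k \<le> Oc * sh k + (real (length (M k)) - 1) * \<nu>"
      using fin unfolding Fin_def by blast
    have aO: "0 \<le> a * Oc" using a1 Oc by simp
    have predle: "pred_makespan p m sh M' \<le> ereal (a * Oc)" using ng by (simp add: not_less)
    have G1: "\<forall>k<m. Lk p M' k \<le> a * Oc * sh k"
    proof (intro allI impI)
      fix k assume k: "k < m"
      have "ratio (Lk p M' k) (sh k) \<le> ereal (a * Oc)" using predle pred_le_iff[OF m1] k by blast
      then show "Lk p M' k \<le> a * Oc * sh k" using ratio_le_iff[OF LkM'nn[OF k] _ aO] sh k by simp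
    qed
    have G2: "\<forall>k<m. \<forall>A\<in>set (M' k). \<forall>B\<in>set (M' k). 2 \<le> card A \<longrightarrow> psum p A \<le> 2 * psum p B"
    proof (intro allI impI ballI)
      fix k A B assume k: "k < m" and A: "A \<in> set (M' k)" and B: "B \<in> set (M' k)" and c: "2 \<le> card A"
      show "psum p A \<le> 2 * psum p B"
      proof (cases "k = k1")
        case True then show ?thesis using pw A B c M'_k by auto
      next
        case False
        then have "A \<in> set (M k)" "B \<in> set (M k)" using A B M'_k setMr by auto
        then show ?thesis using F2 k c by blast
      qed
    qed
    have G3: "\<forall>k<m. \<forall>A\<in>set (M' k). 2 \<le> card A \<longrightarrow> real (length (M' k)) * psum p A \<le> 2 * a * Oc * sh k"
    proof (intro allI impI ballI)
      fix k A assume k: "k < m" and A: "A \<in> set (M' k)" and c: "2 \<le> card A"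
      show "real (length (M' k)) * psum p A \<le> 2 * a * Oc * sh k"
      proof (cases "k = k1")
        case True
        have AN: "A \<in> set NB" using A True M'_k by simp
        have "real (length NB) * psum p A \<le> sum_list (map (\<lambda>B. 2 * psum p B) NB)"
          using pw AN c by (intro sum_list_bound_ge) blast
        also have "\<dots> = 2 * Lk p M' k1" unfolding Lk_def using M'_k by (simp add: sum_list_const_mult)
        also have "\<dots> \<le> 2 * (a * Oc * sh k1)" using G1 k1 by simp
        finally show ?thesis using True M'_k by (simp add: algebra_simps)
      next
        case False
        have AM: "A \<in> set (M k)" using A False M'_k setMr by auto
        have "real (length (M' k)) * psum p A \<le> real (length (M k)) * psum p A"
        proof (rule mult_right_mono)
          show "real (length (M' k)) \<le> real (length (M k))" using False M'_k lenMr by simp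
          show "0 \<le> psum p A" using nnM k AM by blast
        qed
        also have "\<dots> \<le> 2 * a * Oc * sh k" using F3 k AM c by blast
        finally show ?thesis .
      qed
    qed
    have \<nu>\<mu>: "\<nu> \<le> \<mu>" using F4a k0 Bm_in \<mu>_def by blast
    have G4a: "\<forall>k<m. \<forall>B\<in>set (M' k). \<mu> \<le> psum p B"
    proof (intro allI impI ballI)
      fix k B assume k: "k < m" and B: "B \<in> set (M' k)"
      show "\<mu> \<le> psum p B"
      proof (cases "k = k1")
        case True
        have gs: "\<forall>G\<in>set (Mr k1). 2 * \<mu> \<le> psum p G"
        proof
          fix G assume G: "G \<in> set (Mr k1)"
          then have "G \<in> set (M k1)" using setMr by blast
          then have "D \<le> 2 * psum p G" using F2 k1 Dm_in c2 unfolding D_def Dm_def by blast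
          then show "2 * \<mu> \<le> psum p G" using D4 by linarith
        qed
        have "\<forall>B\<in>set NB. \<mu> \<le> psum p B"
        proof (rule lpt_min_ge[OF lp' finpool nnpool l_def _ _ gs])
          show "\<forall>j. ind j Bm + cntl j (Mr k1) = ind j pool" using cpart by blast
          show "psum p Bm = \<mu>" using \<mu>_def by simp
          show "Bm \<subseteq> pool" unfolding pool_def by blast
          show "\<forall>G\<in>set (Mr k1). G \<subseteq> pool" unfolding pool_def by blast
        qed
        then show ?thesis using B True M'_k by simp
      next
        case False
        then have "B \<in> set (M k)" using B M'_k setMr by auto
        then show ?thesis using mn' k by blast
      qed
    qed
    have nu_mu: "\<And>k. k < m \<Longrightarrow> M k \<noteq> [] \<Longrightarrow> (real (length (M k)) - 1) * \<nu> \<le> (real (length (M k)) - 1) * \<mu>"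
    proof -
      fix k assume "k < m" "M k \<noteq> []"
      then have "1 \<le> real (length (M k))" by (simp add: Suc_le_eq)
      then show "(real (length (M k)) - 1) * \<nu> \<le> (real (length (M k)) - 1) * \<mu>"
        using \<nu>\<mu> by (intro mult_left_mono) auto
    qed
    have G4b: "\<forall>k<m. M' k \<noteq> [] \<longrightarrow> Lk p M' k \<le> Oc * sh k + (real (length (M' k)) - 1) * \<mu>"
    proof (intro allI impI)
      fix k assume k: "k < m" and ne: "M' k \<noteq> []"
      show "Lk p M' k \<le> Oc * sh k + (real (length (M' k)) - 1) * \<mu>"
      proof (cases "k = k1")
        case True
        have ne1: "M k1 \<noteq> []" using k1(2) by auto
        have b1: "Lk p M k1 \<le> Oc * sh k1 + (real (length (M k1)) - 1) * \<mu>"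
          using F4b k1(1) ne1 nu_mu[OF k1(1) ne1] by fastforce
        show ?thesis
        proof (cases "k1 = k0")
          case True
          have "Lk p M' k1 = Lk p M k1" using LNB LMr True by simp
          moreover have "length (M' k1) = length (M k1)" using lenM'k1 lenMr True k0(2) by simp
          ultimately show ?thesis using b1 \<open>k = k1\<close> by simp
        next
          case False
          have "Lk p M' k1 = \<mu> + Lk p M k1" using LNB LMr False by simp
          moreover have "real (length (M' k1)) = real (length (M k1)) + 1" using lenM'k1 lenMr False by simp
          ultimately show ?thesis using b1 \<open>k = k1\<close> by (simp add: algebra_simps)
        qed
      next
        case False
        show ?thesis
        proof (cases "k = k0")
          case True
          have L: "Lk p M' k = Lk p M k0 - \<mu>" using Lother False True by simp
          have len: "length (M' k) = length (M k0) - 1" using M'_k lenMr False True by simp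
          have ge2: "2 \<le> length (M k0)" using ne len by (cases "length (M k0)") (auto simp: Suc_le_eq)
          have ne0: "M k0 \<noteq> []" using k0(2) by auto
          have b0: "Lk p M k0 \<le> Oc * sh k0 + (real (length (M k0)) - 1) * \<mu>"
            using F4b k0(1) ne0 nu_mu[OF k0(1) ne0] by fastforce
          have e: "real (length (M k0)) = real (length (M' k)) + 1" using len ge2 by (simp add: of_nat_diff)
          have "Lk p M k0 \<le> Oc * sh k0 + real (length (M' k)) * \<mu>" using b0 e by simp
          then show ?thesis using L True by (simp add: algebra_simps)
        next
          case False2: False
          have L: "Lk p M' k = Lk p M k" using Lother False False2 by simp
          have len: "M' k = M k" using M'_k Mr_k False False2 by simp
          have neM: "M k \<noteq> []" using ne len by simp
          have "Lk p M k \<le> Oc * sh k + (real (length (M k)) - 1) * \<mu>"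
            using F4b k neM nu_mu[OF k neM] by fastforce
          then show ?thesis using L len by simp
        qed
      qed
    qed
    show "Fin p m sh a Oc M'" unfolding Fin_def using G1 G2 G3 G4a G4b by blast
  qed
  have part3: "0 \<le> Oc \<longrightarrow> 1 < a \<longrightarrow> Fin p m sh a Oc M \<longrightarrow> pred_makespan p m sh M' > ereal a * ereal Oc \<longrightarrow>
       (\<forall>k<m. \<forall>A\<in>set (M k). \<forall>k'<m. \<forall>B\<in>set (M k'). 2 \<le> card A \<longrightarrow> psum p A \<le> (2 * a / (a - 1)) * psum p B)"
  proof (intro impI)
    assume Oc: "0 \<le> Oc" and a1: "1 < a" and fin: "Fin p m sh a Oc M"
      and gt: "pred_makespan p m sh M' > ereal a * ereal Oc"
    have F1: "\<forall>k<m. Lk p M k \<le> a * Oc * sh k"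
     and F3: "\<forall>k<m. \<forall>A\<in>set (M k). 2 \<le> card A \<longrightarrow> real (length (M k)) * psum p A \<le> 2 * a * Oc * sh k"
      using fin unfolding Fin_def by blast+
    obtain \<nu> where F4a: "\<forall>k<m. \<forall>B\<in>set (M k). \<nu> \<le> psum p B"
      and F4b: "\<forall>k<m. M k \<noteq> [] \<longrightarrow> Lk p M k \<le> Oc * sh k + (real (length (M k)) - 1) * \<nu>"
      using fin unfolding Fin_def by blast
    have aO: "0 \<le> a * Oc" using a1 Oc by simp
    have "\<not> pred_makespan p m sh M' \<le> ereal (a * Oc)" using gt by (simp add: not_le)
    then obtain k where k: "k < m" "\<not> ratio (Lk p M' k) (sh k) \<le> ereal (a * Oc)"
      using pred_le_iff[OF m1] by blast
    then have kgt: "\<not> Lk p M' k \<le> a * Oc * sh k" using ratio_le_iff[OF LkM'nn[OF k(1)] _ aO] sh by simp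
    have kk: "k = k1 \<and> k1 \<noteq> k0"
    proof (rule ccontr)
      assume "\<not> (k = k1 \<and> k1 \<noteq> k0)"
      then have "Lk p M' k \<le> Lk p M k"
      proof (cases "k = k1")
        case True
        then have "k1 = k0" using \<open>\<not> (k = k1 \<and> k1 \<noteq> k0)\<close> by simp
        then show ?thesis using LNB LMr True by simp
      next
        case False then show ?thesis using Lother \<mu>0 by simp
      qed
      then show False using kgt F1 k(1) by force
    qed
    have ne1: "M k1 \<noteq> []" using k1(2) by auto
    have \<nu>\<mu>: "\<nu> \<le> \<mu>" using F4a k0 Bm_in \<mu>_def by blast
    define ell where "ell = real (length (M k1))"
    have ell1: "1 \<le> ell" using ne1 ell_def by (simp add: Suc_le_eq)
    have s1: "a * Oc * sh k1 < \<mu> + Lk p M k1" using kgt kk LNB LMr by simp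
    have s2: "Lk p M k1 \<le> Oc * sh k1 + (ell - 1) * \<nu>" using F4b k1(1) ne1 ell_def by blast
    have s3: "(ell - 1) * \<nu> \<le> (ell - 1) * \<mu>" using \<nu>\<mu> ell1 by (intro mult_left_mono) auto
    have s4: "(a - 1) * (Oc * sh k1) < ell * \<mu>" using s1 s2 s3 by (simp add: algebra_simps)
    have s5: "ell * D \<le> 2 * a * Oc * sh k1" using F3 k1(1) Dm_in c2 ell_def unfolding D_def Dm_def by blast
    have s6: "(a - 1) * (ell * D) \<le> (a - 1) * (2 * a * Oc * sh k1)" using s5 a1 by (intro mult_left_mono) auto
    have s7: "(2 * a) * ((a - 1) * (Oc * sh k1)) < (2 * a) * (ell * \<mu>)" using s4 a1 by (intro mult_strict_left_mono) auto
    have s8: "ell * ((a - 1) * D) < ell * (2 * a * \<mu>)" using s6 s7 by (simp add: algebra_simps)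
    have s9: "(a - 1) * D < 2 * a * \<mu>" using s8 ell1 by (simp add: mult_less_cancel_left)
    have Dle: "D \<le> (2 * a / (a - 1)) * \<mu>"
    proof -
      have "D < 2 * a * \<mu> / (a - 1)" using s9 a1 by (simp add: pos_less_divide_eq mult.commute)
      then show ?thesis by simp
    qed
    have c0: "0 \<le> 2 * a / (a - 1)" using a1 by simp
    show "\<forall>k<m. \<forall>A\<in>set (M k). \<forall>k'<m. \<forall>B\<in>set (M k'). 2 \<le> card A \<longrightarrow> psum p A \<le> (2 * a / (a - 1)) * psum p B"
    proof (intro allI impI ballI)
      fix k A k' B assume k: "k < m" and A: "A \<in> set (M k)" and k': "k' < m" and B: "B \<in> set (M k')" and c: "2 \<le> card A"
      have "psum p A \<le> D" using mx' k A c by blast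
      also have "\<dots> \<le> (2 * a / (a - 1)) * \<mu>" by (rule Dle)
      also have "\<dots> \<le> (2 * a / (a - 1)) * psum p B" using mn' k' B c0 by (intro mult_left_mono) auto
      finally show "psum p A \<le> (2 * a / (a - 1)) * psum p B" .
    qed
  qed
  show ?thesis using basM' part2 part3 by blast
qed


lemma loop_main:
  assumes "ipr_loop p m sh \<alpha> \<rho> oc M out"
  shows "\<rho> = 4 \<longrightarrow> 0 < \<alpha> \<longrightarrow> \<alpha> \<le> 1 \<longrightarrow> 1 \<le> m \<longrightarrow> (\<forall>j<n. 0 \<le> p j) \<longrightarrow> (\<forall>k<m. 0 \<le> sh k) \<longrightarrow> Bas n m M \<longrightarrow>
    (oc = \<infinity> \<or> (\<exists>Oc. oc = ereal Oc \<and> 0 \<le> Oc \<and> Fin p m sh (1+\<alpha>) Oc M)) \<longrightarrow>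
    (\<exists>M0 c. out = all_bags m M0 \<and> Bas n m M0 \<and> 2 \<le> c \<and> c \<le> 2 + 2/\<alpha> \<and>
      (\<forall>k<m. \<forall>A\<in>set (M0 k). \<forall>k'<m. \<forall>B\<in>set (M0 k'). 2 \<le> card A \<longrightarrow> psum p A \<le> c * psum p B))"
  using assms
proof (induction rule: ipr_loop.induct)
  case (loop_stop p m \<rho> M sh \<alpha> oc)
  show ?case
  proof (intro impI)
    assume r: "\<rho> = 4" and a: "0 < \<alpha>" "\<alpha> \<le> 1" and bas: "Bas n m M"
    have b: "\<forall>k<m. \<forall>A\<in>set (M k). \<forall>k'<m. \<forall>B\<in>set (M k'). 2 \<le> card A \<longrightarrow> psum p A \<le> 4 * psum p B"
      using loop_stop_bound[OF loop_stop[unfolded r]] by simp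
    have "4 \<le> 2 + 2 / \<alpha>" using a by (simp add: field_simps)
    then show "\<exists>M0 c. all_bags m M = all_bags m M0 \<and> Bas n m M0 \<and> 2 \<le> c \<and> c \<le> 2 + 2/\<alpha> \<and>
      (\<forall>k<m. \<forall>A\<in>set (M0 k). \<forall>k'<m. \<forall>B\<in>set (M0 k'). 2 \<le> card A \<longrightarrow> psum p A \<le> c * psum p B)"
      using b bas by (intro exI[of _ M] exI[of _ 4]) auto
  qed
next
  case (loop_reject p m \<rho> M M' sh \<alpha> oc)
  show ?case
  proof (intro impI)
    assume r: "\<rho> = 4" and a: "0 < \<alpha>" "\<alpha> \<le> 1" and m1: "1 \<le> m" and p: "\<forall>j<n. 0 \<le> p j"
      and sh: "\<forall>k<m. 0 \<le> sh k" and bas: "Bas n m M"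
      and oc: "oc = \<infinity> \<or> (\<exists>Oc. oc = ereal Oc \<and> 0 \<le> Oc \<and> Fin p m sh (1+\<alpha>) Oc M)"
    have lc: "loop_cond p m 4 M" using loop_reject r by simp
    have oc': "\<exists>Oc. oc = ereal Oc \<and> 0 \<le> Oc \<and> Fin p m sh (1+\<alpha>) Oc M"
    proof (cases "oc = \<infinity>")
      case True
      have e: "ereal (1 + \<alpha>) * oc = \<infinity>" using a True by simp
      have False using loop_reject(3) unfolding e by simp
      then show ?thesis by blast
    next
      case False then show ?thesis using oc by blast
    qed
    then obtain Oc where Oc: "oc = ereal Oc" "0 \<le> Oc" "Fin p m sh (1+\<alpha>) Oc M" by blast
    have bnd: "\<forall>k<m. \<forall>A\<in>set (M k). \<forall>k'<m. \<forall>B\<in>set (M k'). 2 \<le> card A \<longrightarrow> psum p A \<le> (2 * (1+\<alpha>) / ((1+\<alpha>) - 1)) * psum p B"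
      using step_facts[OF m1 p sh bas lc loop_reject(2), of Oc "1+\<alpha>"] Oc loop_reject(3) a by simp
    have eq: "2 * (1+\<alpha>) / ((1+\<alpha>) - 1) = 2 + 2 / \<alpha>" using a by (simp add: field_simps)
    have bnd2: "\<forall>k<m. \<forall>A\<in>set (M k). \<forall>k'<m. \<forall>B\<in>set (M k'). 2 \<le> card A \<longrightarrow> psum p A \<le> (2 + 2 / \<alpha>) * psum p B"
      using bnd unfolding eq .
    have c2: "2 \<le> 2 + 2 / \<alpha>" using a by simp
    show "\<exists>M0 c. all_bags m M = all_bags m M0 \<and> Bas n m M0 \<and> 2 \<le> c \<and> c \<le> 2 + 2/\<alpha> \<and>
      (\<forall>k<m. \<forall>A\<in>set (M0 k). \<forall>k'<m. \<forall>B\<in>set (M0 k'). 2 \<le> card A \<longrightarrow> psum p A \<le> c * psum p B)"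
      using bas c2 bnd2 by blast
  qed
next
  case (loop_step p m \<rho> M M' sh \<alpha> oc out)
  show ?case
  proof (intro impI)
    assume r: "\<rho> = 4" and a: "0 < \<alpha>" "\<alpha> \<le> 1" and m1: "1 \<le> m" and p: "\<forall>j<n. 0 \<le> p j"
      and sh: "\<forall>k<m. 0 \<le> sh k" and bas: "Bas n m M"
      and oc: "oc = \<infinity> \<or> (\<exists>Oc. oc = ereal Oc \<and> 0 \<le> Oc \<and> Fin p m sh (1+\<alpha>) Oc M)"
    have lc: "loop_cond p m 4 M" using loop_step r by simp
    have basM': "Bas n m M'" using step_facts[OF m1 p sh bas lc loop_step(2)] by blast
    have oc'': "oc = \<infinity> \<or> (\<exists>Oc. oc = ereal Oc \<and> 0 \<le> Oc \<and> Fin p m sh (1+\<alpha>) Oc M')"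
    proof (cases "oc = \<infinity>")
      case True then show ?thesis by simp
    next
      case False
      then obtain Oc where Oc: "oc = ereal Oc" "0 \<le> Oc" "Fin p m sh (1+\<alpha>) Oc M" using oc by blast
      have "Fin p m sh (1+\<alpha>) Oc M'"
        using step_facts[OF m1 p sh bas lc loop_step(2), of Oc "1+\<alpha>"] Oc loop_step(3) a by simp
      then show ?thesis using Oc by blast
    qed
    show "\<exists>M0 c. out = all_bags m M0 \<and> Bas n m M0 \<and> 2 \<le> c \<and> c \<le> 2 + 2/\<alpha> \<and>
      (\<forall>k<m. \<forall>A\<in>set (M0 k). \<forall>k'<m. \<forall>B\<in>set (M0 k'). 2 \<le> card A \<longrightarrow> psum p A \<le> c * psum p B)"
      using loop_step.IH r a m1 p sh basM' oc'' by blast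
  qed
qed


theorem lemma8:
  fixes \<epsilon> \<alpha> :: real
  assumes "0 < \<epsilon>" "\<epsilon> < 1" "0 < \<alpha>" "\<alpha> < 1"
  shows "robust (\<lambda>p n m shat bags. ipr p n m shat \<alpha> \<epsilon> 4 bags) (2 + 2 / \<alpha>)"
  unfolding robust_def
proof (intro allI impI)
  fix p :: "nat \<Rightarrow> real" and n m :: nat and shat s :: "nat \<Rightarrow> real" and bags :: "nat set list"
  assume H0: "1 \<le> m \<and> (\<forall>j<n. 0 \<le> p j) \<and> (\<forall>i<m. 0 \<le> shat i) \<and> (\<forall>i<m. 0 < s i) \<and>
    (\<lambda>p n m shat bags. ipr p n m shat \<alpha> \<epsilon> 4 bags) p n m shat bags"
  have m1: "1 \<le> m" and p: "\<forall>j<n. 0 \<le> p j" and shat: "\<forall>i<m. 0 \<le> shat i" and s: "\<forall>i<m. 0 < s i"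
    and ip: "ipr p n m shat \<alpha> \<epsilon> 4 bags" using H0 by auto
  obtain \<pi> where \<pi>: "bij_betw \<pi> {0..<m} {0..<m}" and core: "ipr_core p n m (shat \<circ> \<pi>) (opt p shat n m) \<alpha> \<epsilon> 4 bags"
    using ip unfolding ipr_def by blast
  define sh where "sh = shat \<circ> \<pi>"
  have shnn: "\<forall>k<m. 0 \<le> sh k"
  proof (intro allI impI)
    fix k assume "k < m"
    then have "\<pi> k \<in> {0..<m}" using \<pi> by (meson atLeastLessThan_iff bij_betwE zero_le)
    then show "0 \<le> sh k" using shat unfolding sh_def by simp
  qed
  obtain B :: "nat \<Rightarrow> nat set" where Bsub: "\<forall>i<m. B i \<subseteq> {0..<n}" and Bdisj: "\<forall>i<m. \<forall>k<m. i \<noteq> k \<longrightarrow> B i \<inter> B k = {}"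
    and Bcov: "(\<Union>i\<in>{0..<m}. B i) = {0..<n}"
    and lp0: "ipr_loop p m (shat \<circ> \<pi>) \<alpha> 4 (Max ((\<lambda>i. ratio (psum p (B i)) ((shat \<circ> \<pi>) i)) ` {0..<m})) (\<lambda>i. [B i]) bags"
  proof -
    from core obtain B where B: "(\<forall>i<m. B i \<subseteq> {0..<n}) \<and> (\<forall>i<m. \<forall>k<m. i \<noteq> k \<longrightarrow> B i \<inter> B k = {}) \<and>
        (\<Union>i\<in>{0..<m}. B i) = {0..<n} \<and>
        (\<forall>i k. i \<le> k \<and> k < m \<longrightarrow> psum p (B i) \<ge> psum p (B k)) \<and>
        Max ((\<lambda>i. ratio (psum p (B i)) ((shat \<circ> \<pi>) i)) ` {0..<m}) \<le> ereal (1 + \<epsilon>) * (opt p shat n m) \<and>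
        ipr_loop p m (shat \<circ> \<pi>) \<alpha> 4 (Max ((\<lambda>i. ratio (psum p (B i)) ((shat \<circ> \<pi>) i)) ` {0..<m})) (\<lambda>i. [B i]) bags"
      unfolding ipr_core_def by (elim exE)
    then show ?thesis by (intro that[of B]) (use B in blast)+
  qed
  define OC where "OC = Max ((\<lambda>i. ratio (psum p (B i)) (sh i)) ` {0..<m})"
  have lp: "ipr_loop p m sh \<alpha> 4 OC (\<lambda>i. [B i]) bags" using lp0 unfolding OC_def sh_def .
  define M where "M = (\<lambda>i. [B i])"
  have basM: "Bas n m M"
  proof -
    have "(\<Sum>k<m. length (M k)) = m" unfolding M_def by simp
    moreover have "\<forall>j. (\<Sum>k<m. cntl j (M k)) = (if j < n then 1 else 0)"
    proof
      fix j
      have e: "(\<Sum>k<m. cntl j (M k)) = (\<Sum>k<m. ind j (B k))" unfolding M_def by simp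
      show "(\<Sum>k<m. cntl j (M k)) = (if j < n then 1 else 0)"
      proof (cases "j < n")
        case True
        then have "j \<in> (\<Union>i\<in>{0..<m}. B i)" using Bcov by simp
        then obtain k0 where k0: "k0 < m" "j \<in> B k0" by auto
        have "(\<Sum>k<m. ind j (B k)) = ind j (B k0) + (\<Sum>k\<in>{..<m} - {k0}. ind j (B k))"
          by (rule sum.remove) (use k0 in auto)
        also have "(\<Sum>k\<in>{..<m} - {k0}. ind j (B k)) = 0"
        proof (rule sum.neutral, intro ballI)
          fix k assume k: "k \<in> {..<m} - {k0}"
          then have "B k \<inter> B k0 = {}" using Bdisj k0(1) by auto
          then show "ind j (B k) = 0" using k0(2) by auto
        qed
        finally show ?thesis using e k0 True by simp
      next
        case False
        have "\<forall>k<m. j \<notin> B k" using Bsub False by (meson atLeastLessThan_iff subsetD)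
        then show ?thesis using e False by simp
      qed
    qed
    ultimately show ?thesis unfolding Bas_def by blast
  qed
  have psnn: "\<And>k. k < m \<Longrightarrow> 0 \<le> psum p (B k)"
    using Bsub p by (metis atLeastLessThan_iff psum_nonneg subsetD)
  have finR: "finite ((\<lambda>i. ratio (psum p (B i)) (sh i)) ` {0..<m})" by simp
  have ratio_nn: "\<And>k. k < m \<Longrightarrow> 0 \<le> ratio (psum p (B k)) (sh k)"
    using psnn shnn by (simp add: ratio_def)
  have geR: "\<And>k. k < m \<Longrightarrow> ratio (psum p (B k)) (sh k) \<le> OC"
    unfolding OC_def using finR by (intro Max_ge) auto
  have oc: "OC = \<infinity> \<or> (\<exists>Oc. OC = ereal Oc \<and> 0 \<le> Oc \<and> Fin p m sh (1+\<alpha>) Oc M)"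
  proof (cases "OC = \<infinity>")
    case True then show ?thesis by simp
  next
    case False
    have OC0: "0 \<le> OC" using geR[of 0] ratio_nn[of 0] m1 by force
    then obtain Oc where Oc: "OC = ereal Oc" using False by (cases "OC") auto
    have Oc0: "0 \<le> Oc" using OC0 Oc by simp
    have bk: "\<And>k. k < m \<Longrightarrow> psum p (B k) \<le> Oc * sh k"
    proof -
      fix k assume k: "k < m"
      have "ratio (psum p (B k)) (sh k) \<le> ereal Oc" using geR[OF k] Oc by simp
      then show "psum p (B k) \<le> Oc * sh k" using ratio_le_iff[OF psnn[OF k] _ Oc0] shnn k by simp
    qed
    have Lk: "\<And>k. Lk p M k = psum p (B k)" unfolding Lk_def M_def by simp
    have F1: "\<forall>k<m. Lk p M k \<le> (1+\<alpha>) * Oc * sh k"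
    proof (intro allI impI)
      fix k assume k: "k < m"
      have "0 \<le> \<alpha> * (Oc * sh k)" using assms(3) Oc0 shnn k by simp
      then show "Lk p M k \<le> (1+\<alpha>) * Oc * sh k" using bk[OF k] Lk by (simp add: algebra_simps)
    qed
    have F2: "\<forall>k<m. \<forall>A\<in>set (M k). \<forall>B'\<in>set (M k). 2 \<le> card A \<longrightarrow> psum p A \<le> 2 * psum p B'"
      using psnn unfolding M_def by fastforce
    have F3: "\<forall>k<m. \<forall>A\<in>set (M k). 2 \<le> card A \<longrightarrow> real (length (M k)) * psum p A \<le> 2 * (1+\<alpha>) * Oc * sh k"
    proof (intro allI impI ballI)
      fix k A assume k: "k < m" and A: "A \<in> set (M k)"
      have "0 \<le> Oc * sh k" using Oc0 shnn k by simp
      moreover have "0 \<le> \<alpha> * (Oc * sh k)" using \<open>0 \<le> Oc * sh k\<close> assms(3) by simp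
      ultimately have "psum p (B k) \<le> 2 * (1+\<alpha>) * (Oc * sh k)"
        using bk[OF k] by (simp add: algebra_simps)
      then show "real (length (M k)) * psum p A \<le> 2 * (1+\<alpha>) * Oc * sh k"
        using A unfolding M_def by (simp add: algebra_simps)
    qed
    have F4: "(\<forall>k<m. \<forall>B'\<in>set (M k). 0 \<le> psum p B') \<and>
        (\<forall>k<m. M k \<noteq> [] \<longrightarrow> Lk p M k \<le> Oc * sh k + (real (length (M k)) - 1) * 0)"
      using psnn bk Lk unfolding M_def by auto
    have "Fin p m sh (1+\<alpha>) Oc M" unfolding Fin_def using F1 F2 F3 F4 by blast
    then show ?thesis using Oc Oc0 by blast
  qed
  have a1: "\<alpha> \<le> 1" using assms(4) by simp
  have ex: "\<exists>M0 c. bags = all_bags m M0 \<and> Bas n m M0 \<and> 2 \<le> c \<and> c \<le> 2 + 2/\<alpha> \<and>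
      (\<forall>k<m. \<forall>A\<in>set (M0 k). \<forall>k'<m. \<forall>B\<in>set (M0 k'). 2 \<le> card A \<longrightarrow> psum p A \<le> c * psum p B)"
    by (rule loop_main[OF lp[folded M_def], rule_format, OF refl assms(3) a1 m1 _ _ basM oc]) (use p shnn in auto)
  then obtain M0 c where M0: "bags = all_bags m M0" "Bas n m M0" "2 \<le> c" "c \<le> 2 + 2/\<alpha>"
    and bnd: "\<forall>k<m. \<forall>A\<in>set (M0 k). \<forall>k'<m. \<forall>B\<in>set (M0 k'). 2 \<le> card A \<longrightarrow> psum p A \<le> c * psum p B"
    by blast
  have len: "length bags = m" using M0(1,2) unfolding Bas_def by (simp add: len_all_bags)
  have cnt: "\<forall>j. cntl j bags = (if j < n then 1 else 0)" using M0(1,2) unfolding Bas_def by (simp add: cntl_all_bags)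
  have multi: "\<forall>t<m. \<forall>u<m. 2 \<le> card (bags!t) \<longrightarrow> psum p (bags!t) \<le> c * psum p (bags!u)"
  proof (intro allI impI)
    fix t u assume t: "t < m" and u: "u < m" and c2: "2 \<le> card (bags!t)"
    have "bags ! t \<in> set bags" "bags ! u \<in> set bags" using t u len by auto
    then obtain k k' where "k < m" "bags ! t \<in> set (M0 k)" "k' < m" "bags ! u \<in> set (M0 k')"
      using M0(1) set_all_bags by auto
    then show "psum p (bags!t) \<le> c * psum p (bags!u)" using bnd c2 by blast
  qed
  show "opt_bags p s m bags \<le> ereal (2 + 2 / \<alpha>) * opt p s n m"
    by (rule robust_from_good[OF m1 s p len cnt M0(3) M0(4) multi])
qed


end
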